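(* Let $R$ be a discrete valuation ring containing a field, with maximal ideal $\mathfrak m$ and fraction field $F$. Then for every integer $n\ge0$: (1) $(1+\mathfrak m)K^M_n(F)\subseteq\widehat K^M_{n+1}(R)$; (2) $(1+\mathfrak m^{m+n})K^M_n(F)\subseteq(1+\mathfrak m^m)\widehat K^M_n(R)$ for all $m\ge1$.
   Context: $\widehat K^M_j(R)$ is the kernel of the residue (tame symbol) map $K^M_j(F)\to K^M_{j-1}(R/\mathfrak m)$ (Kerz's improved Milnor $K$-theory of $R$, viewed inside $K^M_j(F)$). For a subgroup $A\subseteq K^M_n(F)$ and a subgroup $U\subseteq F^\times$, $UA$ denotes the subgroup of $K^M_{n+1}(F)$ generated by the products $\{u\}\cdot a$ with $u\in U$, $a\in A$. *)

theory Defs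
  imports "HOL-Algebra.Algebra" "HOL-Algebra.Free_Abelian_Groups"
begin

definition KM_gens :: "('a, 'b) ring_scheme \<Rightarrow> nat \<Rightarrow> 'a list set" where
  "KM_gens K n = {us. length us = n \<and> set us \<subseteq> carrier K - {\<zero>\<^bsub>K\<^esub>}}"

definition KM_free :: "('a, 'b) ring_scheme \<Rightarrow> nat \<Rightarrow> ('a list \<Rightarrow>\<^sub>0 int) monoid" where
  "KM_free K n = free_Abelian_group (KM_gens K n)"

definition KM_rels :: "('a, 'b) ring_scheme \<Rightarrow> nat \<Rightarrow> ('a list \<Rightarrow>\<^sub>0 int) set" where
  "KM_rels K n =
     {frag_of (xs @ [a \<otimes>\<^bsub>K\<^esub> b] @ ys) - frag_of (xs @ [a] @ ys) - frag_of (xs @ [b] @ ys)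
        | xs a b ys. xs @ [a] @ ys \<in> KM_gens K n \<and> xs @ [b] @ ys \<in> KM_gens K n
                     \<and> xs @ [a \<otimes>\<^bsub>K\<^esub> b] @ ys \<in> KM_gens K n}
   \<union> {frag_of (xs @ [a, b] @ ys) | xs a b ys.
        xs @ [a, b] @ ys \<in> KM_gens K n \<and> a \<oplus>\<^bsub>K\<^esub> b = \<one>\<^bsub>K\<^esub>}"

definition KM_relsub :: "('a, 'b) ring_scheme \<Rightarrow> nat \<Rightarrow> ('a list \<Rightarrow>\<^sub>0 int) set" where
  "KM_relsub K n = generate (KM_free K n) (KM_rels K n)"

text \<open>The Milnor K-group K^M_n(K) (written multiplicatively as a HOL-Algebra group).\<close>
definition KM :: "('a, 'b) ring_scheme \<Rightarrow> nat \<Rightarrow> ('a list \<Rightarrow>\<^sub>0 int) set monoid" where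
  "KM K n = KM_free K n Mod KM_relsub K n"

definition symb :: "('a, 'b) ring_scheme \<Rightarrow> 'a list \<Rightarrow> ('a list \<Rightarrow>\<^sub>0 int) set" where
  "symb K us = KM_relsub K (length us) #>\<^bsub>KM_free K (length us)\<^esub> frag_of us"

definition lmul :: "('a, 'b) ring_scheme \<Rightarrow> nat \<Rightarrow> 'a \<Rightarrow> ('a list \<Rightarrow>\<^sub>0 int) set \<Rightarrow> ('a list \<Rightarrow>\<^sub>0 int) set" where
  "lmul K n u = (SOME h. h \<in> hom (KM K n) (KM K (Suc n)) \<and>
                   (\<forall>us \<in> KM_gens K n. h (symb K us) = symb K (u # us)))"

text \<open>UA: the subgroup of K^M_{n+1} generated by the products {u}\<cdot>a, u \<in> U, a \<in> A.\<close>
definition prod_sub :: "('a, 'b) ring_scheme \<Rightarrow> nat \<Rightarrow> 'a set \<Rightarrow> ('a list \<Rightarrow>\<^sub>0 int) set set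
                          \<Rightarrow> ('a list \<Rightarrow>\<^sub>0 int) set set" where
  "prod_sub K n U A = generate (KM K (Suc n)) {lmul K n u a | u a. u \<in> U \<and> a \<in> A}"

definition fieldR :: "'a::field ring" where
  "fieldR = \<lparr>carrier = UNIV, monoid.mult = (*), one = 1, ring.zero = 0, ring.add = (+)\<rparr>"

text \<open>A normalized discrete valuation v on F (value at 0 irrelevant).\<close>
definition discrete_valuation :: "('a::field \<Rightarrow> int) \<Rightarrow> bool" where
  "discrete_valuation v \<longleftrightarrow>
     (\<forall>x y. x \<noteq> 0 \<longrightarrow> y \<noteq> 0 \<longrightarrow> v (x * y) = v x + v y) \<and>
     (\<forall>x y. x \<noteq> 0 \<longrightarrow> y \<noteq> 0 \<longrightarrow> x + y \<noteq> 0 \<longrightarrow> v (x + y) \<ge> min (v x) (v y)) \<and>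
     (\<exists>\<pi>. \<pi> \<noteq> 0 \<and> v \<pi> = 1)"

definition val_ring :: "('a::field \<Rightarrow> int) \<Rightarrow> 'a set" where
  "val_ring v = {x. x = 0 \<or> v x \<ge> 0}"

definition valR :: "('a::field \<Rightarrow> int) \<Rightarrow> 'a ring" where
  "valR v = fieldR\<lparr>carrier := val_ring v\<rparr>"

definition mpow :: "('a::field \<Rightarrow> int) \<Rightarrow> nat \<Rightarrow> 'a set" where
  "mpow v k = {x. x = 0 \<or> v x \<ge> int k}"

definition resfield :: "('a::field \<Rightarrow> int) \<Rightarrow> 'a set ring" where
  "resfield v = valR v Quot mpow v 1"

definition res :: "('a::field \<Rightarrow> int) \<Rightarrow> 'a \<Rightarrow> 'a set" where
  "res v x = mpow v 1 +>\<^bsub>valR v\<^esub> x"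

definition one_plus :: "('a::field \<Rightarrow> int) \<Rightarrow> nat \<Rightarrow> 'a set" where
  "one_plus v k = {1 + x | x. x \<in> mpow v k}"

definition tame_prop :: "('a::field \<Rightarrow> int) \<Rightarrow> nat \<Rightarrow> (('a list \<Rightarrow>\<^sub>0 int) set \<Rightarrow> ('a set list \<Rightarrow>\<^sub>0 int) set) \<Rightarrow> bool" where
  "tame_prop v n d \<longleftrightarrow>
     d \<in> hom (KM fieldR (Suc n)) (KM (resfield v) n) \<and>
     (\<forall>\<pi> us. \<pi> \<noteq> 0 \<and> v \<pi> = 1 \<and> length us = n \<and> (\<forall>u\<in>set us. u \<noteq> 0 \<and> v u = 0)
        \<longrightarrow> d (symb fieldR (\<pi> # us)) = symb (resfield v) (map (res v) us)) \<and>
     (\<forall>us. length us = Suc n \<and> (\<forall>u\<in>set us. u \<noteq> 0 \<and> v u = 0)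
        \<longrightarrow> d (symb fieldR us) = \<one>\<^bsub>KM (resfield v) n\<^esub>)"

definition tame :: "('a::field \<Rightarrow> int) \<Rightarrow> nat \<Rightarrow> ('a list \<Rightarrow>\<^sub>0 int) set \<Rightarrow> ('a set list \<Rightarrow>\<^sub>0 int) set" where
  "tame v n = (SOME d. tame_prop v n d)"

text \<open>Kerz's improved Milnor K-group \<widehat>K^M_j(R) \<subseteq> K^M_j(F): kernel of the tame symbol
  (all of K^M_0(F) for j = 0).\<close>
fun hatK :: "('a::field \<Rightarrow> int) \<Rightarrow> nat \<Rightarrow> ('a list \<Rightarrow>\<^sub>0 int) set set" where
  "hatK v 0 = carrier (KM fieldR 0)"
| "hatK v (Suc n) = kernel (KM fieldR (Suc n)) (KM (resfield v) n) (tame v n)"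

end

theory Submission
  imports Defs
begin


section \<open>Basic structure of KM\<close>

lemma KM_free_comm: "comm_group (KM_free K n)"
  unfolding KM_free_def by (rule abelian_free_Abelian_group)

lemma KM_free_group: "group (KM_free K n)"
  unfolding KM_free_def by simp

lemma KM_free_carrier: "x \<in> carrier (KM_free K n) \<longleftrightarrow> Poly_Mapping.keys x \<subseteq> KM_gens K n"
  unfolding KM_free_def by simp

lemma KM_free_mult [simp]: "x \<otimes>\<^bsub>KM_free K n\<^esub> y = x + y"
  unfolding KM_free_def by simp

lemma KM_free_one [simp]: "\<one>\<^bsub>KM_free K n\<^esub> = 0"
  unfolding KM_free_def by simp

lemma frag_of_KM_free: "frag_of us \<in> carrier (KM_free K n) \<longleftrightarrow> us \<in> KM_gens K n"
  unfolding KM_free_def by simp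

lemma KM_rels_carrier: "KM_rels K n \<subseteq> carrier (KM_free K n)"
proof
  fix r assume "r \<in> KM_rels K n"
  then show "r \<in> carrier (KM_free K n)"
    unfolding KM_rels_def KM_free_carrier
    by (auto dest!: subsetD[OF keys_diff])
qed

lemma KM_relsub_subgroup: "subgroup (KM_relsub K n) (KM_free K n)"
  unfolding KM_relsub_def
  by (rule group.generate_is_subgroup[OF KM_free_group KM_rels_carrier])

lemma KM_relsub_normal: "KM_relsub K n \<lhd> KM_free K n"
  using comm_group.subgroup_imp_normal[OF KM_free_comm KM_relsub_subgroup] .

lemma KM_comm: "comm_group (KM K n)"
  unfolding KM_def by (rule comm_group.abelian_FactGroup[OF KM_free_comm KM_relsub_subgroup])

lemma KM_group: "group (KM K n)"
  using KM_comm comm_group.axioms(2) by blast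

lemma KM_proj_hom: "(\<lambda>a. KM_relsub K n #>\<^bsub>KM_free K n\<^esub> a) \<in> hom (KM_free K n) (KM K n)"
  unfolding KM_def using normal.r_coset_hom_Mod[OF KM_relsub_normal] .

lemma KM_carrier: "carrier (KM K n) = (\<lambda>a. KM_relsub K n #>\<^bsub>KM_free K n\<^esub> a) ` carrier (KM_free K n)"
  unfolding KM_def carrier_FactGroup ..

lemma symb_proj: "us \<in> KM_gens K n \<Longrightarrow> symb K us = KM_relsub K n #>\<^bsub>KM_free K n\<^esub> frag_of us"
  unfolding symb_def KM_gens_def by auto

lemma symb_carrier: "us \<in> KM_gens K n \<Longrightarrow> symb K us \<in> carrier (KM K n)"
  unfolding KM_carrier using symb_proj[of us K n] frag_of_KM_free[of us K n] by blast

lemma proj_rel: assumes "r \<in> KM_relsub K n"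
  shows "KM_relsub K n #>\<^bsub>KM_free K n\<^esub> r = \<one>\<^bsub>KM K n\<^esub>"
proof -
  have "KM_relsub K n #>\<^bsub>KM_free K n\<^esub> r = KM_relsub K n"
    using subgroup.rcos_const[OF KM_relsub_subgroup KM_free_group assms] .
  then show ?thesis unfolding KM_def by simp
qed

lemma KM_induct[consumes 1, case_names one sym diff]:
  assumes x: "x \<in> carrier (KM K n)"
    and one: "P \<one>\<^bsub>KM K n\<^esub>"
    and sym: "\<And>us. us \<in> KM_gens K n \<Longrightarrow> P (symb K us)"
    and diff: "\<And>x y. x \<in> carrier (KM K n) \<Longrightarrow> y \<in> carrier (KM K n) \<Longrightarrow> P x \<Longrightarrow> P y
                  \<Longrightarrow> P (x \<otimes>\<^bsub>KM K n\<^esub> inv\<^bsub>KM K n\<^esub> y)"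
  shows "P x"
proof -
  let ?p = "\<lambda>a. KM_relsub K n #>\<^bsub>KM_free K n\<^esub> a"
  obtain c where c: "c \<in> carrier (KM_free K n)" "x = ?p c" using x KM_carrier by blast
  interpret h: group_hom "KM_free K n" "KM K n" ?p
    by (simp add: group_hom_def group_hom_axioms_def KM_free_group KM_group KM_proj_hom)
  have "Poly_Mapping.keys c \<subseteq> KM_gens K n" using c KM_free_carrier by blast
  then have "P (?p c)"
  proof (rule free_Abelian_group_induct[where P="\<lambda>c. P (?p c)"])
    show "P (?p 0)" using one h.hom_one by simp
  next
    fix a b assume 2: "Poly_Mapping.keys a \<subseteq> KM_gens K n" "Poly_Mapping.keys b \<subseteq> KM_gens K n" "P (?p a)" "P (?p b)"
    have ab: "a \<in> carrier (KM_free K n)" "b \<in> carrier (KM_free K n)" using 2(1,2) by (simp_all add: KM_free_carrier)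
    have eq: "a - b = a \<otimes>\<^bsub>KM_free K n\<^esub> inv\<^bsub>KM_free K n\<^esub> b"
      using 2 unfolding KM_free_def by simp
    have "?p (a \<otimes>\<^bsub>KM_free K n\<^esub> inv\<^bsub>KM_free K n\<^esub> b) = ?p a \<otimes>\<^bsub>KM K n\<^esub> ?p (inv\<^bsub>KM_free K n\<^esub> b)"
      using h.hom_mult[OF ab(1) group.inv_closed[OF KM_free_group ab(2)]] .
    then have "?p (a - b) = ?p a \<otimes>\<^bsub>KM K n\<^esub> inv\<^bsub>KM K n\<^esub> ?p b"
      unfolding eq h.hom_inv[OF ab(2)] .
    then show "P (?p (a - b))" using diff[OF h.hom_closed[OF ab(1)] h.hom_closed[OF ab(2)] 2(3,4)] by simp
  next
    fix us assume "us \<in> KM_gens K n"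
    then show "P (?p (frag_of us))" using sym symb_proj by metis
  qed
  then show ?thesis using c by simp
qed

lemma KM_hom_eq:
  assumes "group G" "h1 \<in> hom (KM K n) G" "h2 \<in> hom (KM K n) G"
    and "\<And>us. us \<in> KM_gens K n \<Longrightarrow> h1 (symb K us) = h2 (symb K us)"
    and "x \<in> carrier (KM K n)"
  shows "h1 x = h2 x"
proof -
  interpret g1: group_hom "KM K n" G h1 using assms by (simp add: group_hom_def group_hom_axioms_def KM_group)
  interpret g2: group_hom "KM K n" G h2 using assms by (simp add: group_hom_def group_hom_axioms_def KM_group)
  show ?thesis
    using assms(5)
  proof (induction x rule: KM_induct)
    case one then show ?case by simp
  next
    case (sym us) then show ?case using assms(4) by simp
  next
    case (diff x y) then show ?case by simp
  qed
qed

lemma KM_universal: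
  assumes G: "comm_group G"
    and f: "\<And>us. us \<in> KM_gens K n \<Longrightarrow> f us \<in> carrier G"
    and fm: "\<And>xs a b ys. xs @ [a] @ ys \<in> KM_gens K n \<Longrightarrow> xs @ [b] @ ys \<in> KM_gens K n
              \<Longrightarrow> xs @ [a \<otimes>\<^bsub>K\<^esub> b] @ ys \<in> KM_gens K n
              \<Longrightarrow> f (xs @ [a \<otimes>\<^bsub>K\<^esub> b] @ ys) = f (xs @ [a] @ ys) \<otimes>\<^bsub>G\<^esub> f (xs @ [b] @ ys)"
    and fs: "\<And>xs a b ys. xs @ [a, b] @ ys \<in> KM_gens K n \<Longrightarrow> a \<oplus>\<^bsub>K\<^esub> b = \<one>\<^bsub>K\<^esub>
              \<Longrightarrow> f (xs @ [a, b] @ ys) = \<one>\<^bsub>G\<^esub>"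
  shows "\<exists>h \<in> hom (KM K n) G. \<forall>us \<in> KM_gens K n. h (symb K us) = f us"
proof -
  interpret G: comm_group G by (rule G)
  obtain h0 where h0: "h0 \<in> hom (free_Abelian_group (KM_gens K n)) G"
    "\<And>x. x \<in> KM_gens K n \<Longrightarrow> h0 (frag_of x) = f x"
    using G.free_Abelian_group_universal[of f "KM_gens K n"] f by blast
  have h0': "h0 \<in> hom (KM_free K n) G" using h0(1) by (simp add: KM_free_def)
  interpret h: group_hom "KM_free K n" G h0
    by (simp add: group_hom_def group_hom_axioms_def KM_free_group h0' G.group_axioms)
  have relk: "KM_rels K n \<subseteq> kernel (KM_free K n) G h0"
  proof
    fix r assume r: "r \<in> KM_rels K n"
    then have rc: "r \<in> carrier (KM_free K n)" using KM_rels_carrier by blast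
    have "h0 r = \<one>\<^bsub>G\<^esub>"
      using r
    proof (unfold KM_rels_def, elim UnE CollectE exE conjE)
      fix xs a b ys
      assume r: "r = frag_of (xs @ [a \<otimes>\<^bsub>K\<^esub> b] @ ys) - frag_of (xs @ [a] @ ys) - frag_of (xs @ [b] @ ys)"
        and g: "xs @ [a] @ ys \<in> KM_gens K n" "xs @ [b] @ ys \<in> KM_gens K n" "xs @ [a \<otimes>\<^bsub>K\<^esub> b] @ ys \<in> KM_gens K n"
      let ?A = "frag_of (xs @ [a] @ ys)" and ?B = "frag_of (xs @ [b] @ ys)" and ?C = "frag_of (xs @ [a \<otimes>\<^bsub>K\<^esub> b] @ ys)"
      have c: "?A \<in> carrier (KM_free K n)" "?B \<in> carrier (KM_free K n)" "?C \<in> carrier (KM_free K n)"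
        using g frag_of_KM_free by auto
      have "?C = r \<otimes>\<^bsub>KM_free K n\<^esub> ?A \<otimes>\<^bsub>KM_free K n\<^esub> ?B" using r by simp
      have rA: "r + ?A \<in> carrier (KM_free K n)"
        using monoid.m_closed[OF group.is_monoid[OF KM_free_group] rc c(1)] by simp
      have e1: "h0 (r + ?A) = h0 r \<otimes>\<^bsub>G\<^esub> h0 ?A" using h.hom_mult[OF rc c(1)] by simp
      have e2: "h0 (r + ?A + ?B) = h0 (r + ?A) \<otimes>\<^bsub>G\<^esub> h0 ?B" using h.hom_mult[OF rA c(2)] by simp
      from \<open>?C = _\<close> e1 e2 have "h0 ?C = h0 r \<otimes>\<^bsub>G\<^esub> h0 ?A \<otimes>\<^bsub>G\<^esub> h0 ?B" by simp
      then have "f (xs @ [a \<otimes>\<^bsub>K\<^esub> b] @ ys) = h0 r \<otimes>\<^bsub>G\<^esub> f (xs @ [a] @ ys) \<otimes>\<^bsub>G\<^esub> f (xs @ [b] @ ys)"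
        using h0(2) g by simp
      then have "h0 r \<otimes>\<^bsub>G\<^esub> (f (xs @ [a] @ ys) \<otimes>\<^bsub>G\<^esub> f (xs @ [b] @ ys)) = \<one>\<^bsub>G\<^esub> \<otimes>\<^bsub>G\<^esub> (f (xs @ [a] @ ys) \<otimes>\<^bsub>G\<^esub> f (xs @ [b] @ ys))"
        using fm[OF g] f g rc by (simp add: G.m_assoc)
      then show "h0 r = \<one>\<^bsub>G\<^esub>"
        using f g rc G.r_cancel[of "f (xs @ [a] @ ys) \<otimes>\<^bsub>G\<^esub> f (xs @ [b] @ ys)" "h0 r" "\<one>\<^bsub>G\<^esub>"] by simp
    next
      fix xs a b ys
      assume r: "r = frag_of (xs @ [a, b] @ ys)" and g: "xs @ [a, b] @ ys \<in> KM_gens K n"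
        and s: "a \<oplus>\<^bsub>K\<^esub> b = \<one>\<^bsub>K\<^esub>"
      show "h0 r = \<one>\<^bsub>G\<^esub>" using r h0(2)[OF g] fs[OF g s] by simp
    qed
    then show "r \<in> kernel (KM_free K n) G h0" using rc unfolding kernel_def by simp
  qed
  have subk: "KM_relsub K n \<subseteq> kernel (KM_free K n) G h0"
    unfolding KM_relsub_def
    by (rule group.generate_subgroup_incl[OF KM_free_group relk h.subgroup_kernel])
  obtain g where g: "g \<in> hom (KM_free K n Mod KM_relsub K n) G"
    "\<And>x. x \<in> carrier (KM_free K n) \<Longrightarrow> g (KM_relsub K n #>\<^bsub>KM_free K n\<^esub> x) = h0 x"
  proof (rule FactGroup_universal[OF h0' KM_relsub_normal])
    fix x y assume xy: "x \<in> carrier (KM_free K n)" "y \<in> carrier (KM_free K n)"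
      and e: "KM_relsub K n #>\<^bsub>KM_free K n\<^esub> x = KM_relsub K n #>\<^bsub>KM_free K n\<^esub> y"
    have "y \<in> KM_relsub K n #>\<^bsub>KM_free K n\<^esub> x"
      using group.rcos_self[OF KM_free_group xy(2) KM_relsub_subgroup] e by simp
    then obtain r where r: "r \<in> KM_relsub K n" "y = r \<otimes>\<^bsub>KM_free K n\<^esub> x"
      unfolding r_coset_def by auto
    have rc: "r \<in> carrier (KM_free K n)" using r(1) subgroup.subset[OF KM_relsub_subgroup] by blast
    have "h0 y = h0 r \<otimes>\<^bsub>G\<^esub> h0 x" using r(2) h.hom_mult[OF rc xy(1)] by simp
    also have "h0 r = \<one>\<^bsub>G\<^esub>" using subk r(1) unfolding kernel_def by blast
    finally show "h0 x = h0 y" using xy by simp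
  qed blast
  show ?thesis
  proof (intro bexI ballI)
    show "g \<in> hom (KM K n) G" using g(1) unfolding KM_def .
    fix us assume us: "us \<in> KM_gens K n"
    show "g (symb K us) = f us"
      using g(2)[of "frag_of us"] h0(2)[OF us] symb_proj[OF us] frag_of_KM_free[of us K n] us by simp
  qed
qed




lemma KM_gens_iff: "us \<in> KM_gens K n \<longleftrightarrow> length us = n \<and> (\<forall>u\<in>set us. u \<in> carrier K \<and> u \<noteq> \<zero>\<^bsub>K\<^esub>)"
  unfolding KM_gens_def by auto

lemma KM_gens_length: "us \<in> KM_gens K n \<Longrightarrow> length us = n"
  unfolding KM_gens_def by auto

lemma rel_in_relsub: "r \<in> KM_rels K n \<Longrightarrow> r \<in> KM_relsub K n"
  unfolding KM_relsub_def by (rule generate.incl)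

lemma symb_mult_gen:
  assumes A: "xs @ [a] @ ys \<in> KM_gens K n" and B: "xs @ [b] @ ys \<in> KM_gens K n"
    and C: "xs @ [a \<otimes>\<^bsub>K\<^esub> b] @ ys \<in> KM_gens K n"
  shows "symb K (xs @ [a \<otimes>\<^bsub>K\<^esub> b] @ ys) = symb K (xs @ [a] @ ys) \<otimes>\<^bsub>KM K n\<^esub> symb K (xs @ [b] @ ys)"
proof -
  let ?p = "\<lambda>a. KM_relsub K n #>\<^bsub>KM_free K n\<^esub> a"
  let ?A = "frag_of (xs @ [a] @ ys)" and ?B = "frag_of (xs @ [b] @ ys)" and ?C = "frag_of (xs @ [a \<otimes>\<^bsub>K\<^esub> b] @ ys)"
  define r where "r = ?C - ?A - ?B"
  have rr: "r \<in> KM_rels K n" unfolding r_def KM_rels_def using A B C by blast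
  have rc: "r \<in> carrier (KM_free K n)" using rr KM_rels_carrier by blast
  have c: "?A \<in> carrier (KM_free K n)" "?B \<in> carrier (KM_free K n)" using A B frag_of_KM_free by auto
  interpret h: group_hom "KM_free K n" "KM K n" ?p
    by (simp add: group_hom_def group_hom_axioms_def KM_free_group KM_group KM_proj_hom)
  have rA: "r + ?A \<in> carrier (KM_free K n)"
    using monoid.m_closed[OF group.is_monoid[OF KM_free_group] rc c(1)] by simp
  have "?C = r + ?A + ?B" unfolding r_def by simp
  then have "?p ?C = ?p (r + ?A) \<otimes>\<^bsub>KM K n\<^esub> ?p ?B" using h.hom_mult[OF rA c(2)] by simp
  also have "?p (r + ?A) = ?p r \<otimes>\<^bsub>KM K n\<^esub> ?p ?A" using h.hom_mult[OF rc c(1)] by simp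
  also have "?p r = \<one>\<^bsub>KM K n\<^esub>" using proj_rel[OF rel_in_relsub[OF rr]] .
  finally have "?p ?C = ?p ?A \<otimes>\<^bsub>KM K n\<^esub> ?p ?B" using h.hom_closed[OF c(1)] by simp
  then show ?thesis using symb_proj A B C by metis
qed

lemma symb_steinberg_gen:
  assumes A: "xs @ [a, b] @ ys \<in> KM_gens K n" and s: "a \<oplus>\<^bsub>K\<^esub> b = \<one>\<^bsub>K\<^esub>"
  shows "symb K (xs @ [a, b] @ ys) = \<one>\<^bsub>KM K n\<^esub>"
proof -
  have rr: "frag_of (xs @ [a, b] @ ys) \<in> KM_rels K n" unfolding KM_rels_def using A s by blast
  show ?thesis using proj_rel[OF rel_in_relsub[OF rr]] symb_proj[OF A] by simp
qed

context field
begin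

lemma gens_mid: "xs @ a # ys \<in> KM_gens R n \<longleftrightarrow> length xs + length ys + 1 = n \<and>
   (\<forall>u\<in>set xs. u \<in> carrier R \<and> u \<noteq> \<zero>) \<and> (\<forall>u\<in>set ys. u \<in> carrier R \<and> u \<noteq> \<zero>) \<and> a \<in> carrier R \<and> a \<noteq> \<zero>"
  unfolding KM_gens_iff by auto

lemma nz_mult: "a \<in> carrier R \<Longrightarrow> b \<in> carrier R \<Longrightarrow> a \<noteq> \<zero> \<Longrightarrow> b \<noteq> \<zero> \<Longrightarrow> a \<otimes> b \<noteq> \<zero>"
  using integral by blast

lemma nz_inv: "a \<in> carrier R \<Longrightarrow> a \<noteq> \<zero> \<Longrightarrow> inv a \<in> carrier R \<and> inv a \<noteq> \<zero> \<and> a \<otimes> inv a = \<one> \<and> inv a \<otimes> a = \<one>"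
  using field_Units by (metis DiffI Units_inv_closed Units_l_inv Units_r_inv empty_iff insert_iff
      l_null one_not_zero Units_closed)

lemma symb_mult:
  assumes "xs @ [a] @ ys \<in> KM_gens R n" "b \<in> carrier R" "b \<noteq> \<zero>"
  shows "symb R (xs @ [a \<otimes> b] @ ys) = symb R (xs @ [a] @ ys) \<otimes>\<^bsub>KM R n\<^esub> symb R (xs @ [b] @ ys)"
  by (rule symb_mult_gen) (use assms nz_mult in \<open>auto simp: gens_mid\<close>)

lemma gens_replace: "xs @ [a] @ ys \<in> KM_gens R n \<Longrightarrow> b \<in> carrier R \<Longrightarrow> b \<noteq> \<zero> \<Longrightarrow> xs @ [b] @ ys \<in> KM_gens R n"
  by (auto simp: gens_mid)

lemma symb_in: "xs @ [a] @ ys \<in> KM_gens R n \<Longrightarrow> symb R (xs @ [a] @ ys) \<in> carrier (KM R n)"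
  using symb_carrier by blast

lemma symb_one_entry:
  assumes "xs @ [a] @ ys \<in> KM_gens R n"
  shows "symb R (xs @ [\<one>] @ ys) = \<one>\<^bsub>KM R n\<^esub>"
proof -
  interpret G: comm_group "KM R n" by (rule KM_comm)
  have g: "xs @ [\<one>] @ ys \<in> KM_gens R n" using gens_replace[OF assms] by simp
  have "symb R (xs @ [\<one> \<otimes> \<one>] @ ys) = symb R (xs @ [\<one>] @ ys) \<otimes>\<^bsub>KM R n\<^esub> symb R (xs @ [\<one>] @ ys)"
    using symb_mult[OF g] by simp
  then have "symb R (xs @ [\<one>] @ ys) \<otimes>\<^bsub>KM R n\<^esub> symb R (xs @ [\<one>] @ ys) = symb R (xs @ [\<one>] @ ys) \<otimes>\<^bsub>KM R n\<^esub> \<one>\<^bsub>KM R n\<^esub>"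
    using symb_in[OF g] by simp
  then show ?thesis using G.l_cancel symb_in[OF g] G.one_closed by metis
qed

lemma symb_inv_entry:
  assumes g: "xs @ [a] @ ys \<in> KM_gens R n"
  shows "symb R (xs @ [inv a] @ ys) = inv\<^bsub>KM R n\<^esub> symb R (xs @ [a] @ ys)"
proof -
  interpret G: comm_group "KM R n" by (rule KM_comm)
  have a: "a \<in> carrier R" "a \<noteq> \<zero>" using g by (auto simp: gens_mid)
  have i: "inv a \<in> carrier R" "inv a \<noteq> \<zero>" "a \<otimes> inv a = \<one>" using nz_inv[OF a] by auto
  have g2: "xs @ [inv a] @ ys \<in> KM_gens R n" using gens_replace[OF g i(1,2)] .
  have "symb R (xs @ [a] @ ys) \<otimes>\<^bsub>KM R n\<^esub> symb R (xs @ [inv a] @ ys) = \<one>\<^bsub>KM R n\<^esub>"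
    using symb_mult[OF g i(1,2)] symb_one_entry[OF g] i(3) by simp
  then show ?thesis using G.inv_equality symb_in[OF g] symb_in[OF g2] G.m_comm by metis
qed

lemma neg_nz: "a \<in> carrier R \<Longrightarrow> a \<noteq> \<zero> \<Longrightarrow> \<ominus> a \<in> carrier R \<and> \<ominus> a \<noteq> \<zero>"
  by (metis a_inv_closed minus_minus minus_zero)

lemma one_minus_nz: "a \<in> carrier R \<Longrightarrow> a \<noteq> \<one> \<Longrightarrow> \<one> \<ominus> a \<in> carrier R \<and> \<one> \<ominus> a \<noteq> \<zero>"
proof -
  assume a: "a \<in> carrier R" "a \<noteq> \<one>"
  have "a = \<one>" if h: "\<one> \<ominus> a = \<zero>"
  proof -
    from a(1) have "a = \<one> \<ominus> (\<one> \<ominus> a)" by algebra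
    also have "\<dots> = \<one>" using h by (simp add: minus_eq)
    finally show ?thesis .
  qed
  then show ?thesis using a by auto
qed

lemma symb_steinberg:
  assumes "xs @ [a, b] @ ys \<in> KM_gens R n" "a \<oplus> b = \<one>"
  shows "symb R (xs @ [a, b] @ ys) = \<one>\<^bsub>KM R n\<^esub>"
  using symb_steinberg_gen[OF assms] .

lemma symb_neg_pair:
  assumes g: "xs @ [a] @ ys \<in> KM_gens R n"
  shows "symb R (xs @ [a, \<ominus> a] @ ys) = \<one>\<^bsub>KM R (Suc n)\<^esub>"
proof -
  interpret G: comm_group "KM R (Suc n)" by (rule KM_comm)
  have a: "a \<in> carrier R" "a \<noteq> \<zero>" using g by (auto simp: gens_mid)
  have na: "\<ominus> a \<in> carrier R" "\<ominus> a \<noteq> \<zero>" using neg_nz[OF a] by auto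
  show ?thesis
  proof (cases "a = \<one>")
    case True
    have "xs @ [\<one>] @ ((\<ominus> \<one>) # ys) \<in> KM_gens R (Suc n)" using g True na by (auto simp: gens_mid)
    from symb_one_entry[OF this] True show ?thesis by simp
  next
    case False
    define ia where "ia = inv a"
    have ia: "ia \<in> carrier R" "ia \<noteq> \<zero>" "a \<otimes> ia = \<one>" "ia \<otimes> a = \<one>" using nz_inv[OF a] ia_def by auto
    have iia: "inv ia = a" unfolding ia_def using a field_Units by (simp add: Units_inv_inv)
    have ia1: "ia \<noteq> \<one>" using ia(3) False a(1) by auto
    define b where "b = \<one> \<ominus> a"
    define c where "c = \<one> \<ominus> ia"
    have b: "b \<in> carrier R" "b \<noteq> \<zero>" using one_minus_nz[OF a(1) False] b_def by auto
    have c: "c \<in> carrier R" "c \<noteq> \<zero>" using one_minus_nz[OF ia(1) ia1] c_def by auto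
    define ic where "ic = inv c"
    have ic: "ic \<in> carrier R" "ic \<noteq> \<zero>" "c \<otimes> ic = \<one>" using nz_inv[OF c] ic_def by auto
    have e1: "(\<ominus> a) \<otimes> c = \<ominus> a \<oplus> a \<otimes> ia" unfolding c_def using a(1) ia(1) by algebra
    have e2: "(\<ominus> a) \<otimes> c = b" using e1 ia(3) a(1) unfolding b_def by (simp add: minus_eq a_comm)
    have "\<ominus> a = (\<ominus> a) \<otimes> (c \<otimes> ic)" using ic(3) na(1) by simp
    also have "\<dots> = ((\<ominus> a) \<otimes> c) \<otimes> ic" using na(1) c(1) ic(1) by (simp add: m_assoc)
    finally have eq: "\<ominus> a = b \<otimes> ic" using e2 by simp
    have g1: "(xs @ [a]) @ [b] @ ys \<in> KM_gens R (Suc n)" using g b by (auto simp: gens_mid)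
    have m: "symb R ((xs @ [a]) @ [b \<otimes> ic] @ ys) = symb R ((xs @ [a]) @ [b] @ ys) \<otimes>\<^bsub>KM R (Suc n)\<^esub> symb R ((xs @ [a]) @ [ic] @ ys)"
      using symb_mult[OF g1 ic(1,2)] .
    have s1: "symb R ((xs @ [a]) @ [b] @ ys) = \<one>\<^bsub>KM R (Suc n)\<^esub>"
    proof -
      have "a \<oplus> b = \<one>" unfolding b_def using a(1) by algebra
      then show ?thesis using symb_steinberg[of xs a b ys "Suc n"] g1 by simp
    qed
    have g2: "(xs @ [a]) @ [c] @ ys \<in> KM_gens R (Suc n)" using g c by (auto simp: gens_mid)
    have s2: "symb R ((xs @ [a]) @ [ic] @ ys) = inv\<^bsub>KM R (Suc n)\<^esub> symb R ((xs @ [a]) @ [c] @ ys)"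
      using symb_inv_entry[OF g2] ic_def by simp
    have g3: "xs @ [ia] @ (c # ys) \<in> KM_gens R (Suc n)" using g c ia by (auto simp: gens_mid)
    have s3: "symb R (xs @ [inv ia] @ (c # ys)) = inv\<^bsub>KM R (Suc n)\<^esub> symb R (xs @ [ia] @ (c # ys))"
      using symb_inv_entry[OF g3] .
    have s4: "symb R (xs @ [ia, c] @ ys) = \<one>\<^bsub>KM R (Suc n)\<^esub>"
    proof -
      have "ia \<oplus> c = \<one>" unfolding c_def using ia(1) by algebra
      then show ?thesis using symb_steinberg[of xs ia c ys "Suc n"] g3 by simp
    qed
    have "symb R ((xs @ [a]) @ [c] @ ys) = \<one>\<^bsub>KM R (Suc n)\<^esub>" using s3 s4 iia by simp
    then show ?thesis using m s1 s2 eq by simp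
  qed
qed

lemma symb_neg_pair2:
  assumes g: "xs @ [a, b] @ ys \<in> KM_gens R n"
  shows "symb R (xs @ [a, \<ominus> a] @ ys) = \<one>\<^bsub>KM R n\<^esub>"
proof -
  have n: "n = Suc (length xs + length ys + 1)" using g KM_gens_length by fastforce
  have "xs @ [a] @ ys \<in> KM_gens R (length xs + length ys + 1)" using g by (auto simp: gens_mid)
  from symb_neg_pair[OF this] n show ?thesis by simp
qed

lemma symb_swap:
  assumes g: "xs @ [a, b] @ ys \<in> KM_gens R n"
  shows "symb R (xs @ [a, b] @ ys) \<otimes>\<^bsub>KM R n\<^esub> symb R (xs @ [b, a] @ ys) = \<one>\<^bsub>KM R n\<^esub>"
proof -
  interpret G: comm_group "KM R n" by (rule KM_comm)
  have a: "a \<in> carrier R" "a \<noteq> \<zero>" and b: "b \<in> carrier R" "b \<noteq> \<zero>" using g by (auto simp: gens_mid)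
  have na: "\<ominus> a \<in> carrier R" "\<ominus> a \<noteq> \<zero>" using neg_nz[OF a] by auto
  have nb: "\<ominus> b \<in> carrier R" "\<ominus> b \<noteq> \<zero>" using neg_nz[OF b] by auto
  have ab: "a \<otimes> b \<in> carrier R" "a \<otimes> b \<noteq> \<zero>" using a b nz_mult by auto
  have nab: "\<ominus> (a \<otimes> b) \<in> carrier R" "\<ominus> (a \<otimes> b) \<noteq> \<zero>" using neg_nz[OF ab] by auto
  have g1: "xs @ [a] @ (\<ominus> (a \<otimes> b) # ys) \<in> KM_gens R n" using g nab by (auto simp: gens_mid)
  have "symb R (xs @ [a \<otimes> b] @ (\<ominus> (a \<otimes> b) # ys)) = symb R (xs @ [a] @ (\<ominus> (a \<otimes> b) # ys)) \<otimes>\<^bsub>KM R n\<^esub> symb R (xs @ [b] @ (\<ominus> (a \<otimes> b) # ys))"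
    using symb_mult[OF g1 b] .
  moreover have "symb R (xs @ [a \<otimes> b] @ (\<ominus> (a \<otimes> b) # ys)) = \<one>\<^bsub>KM R n\<^esub>"
    using symb_neg_pair2[of xs "a \<otimes> b" "\<ominus> (a \<otimes> b)" ys n] g ab nab by (auto simp: gens_mid)
  moreover have "symb R (xs @ [a] @ (\<ominus> (a \<otimes> b) # ys)) = symb R (xs @ [a, b] @ ys)"
  proof -
    have g2: "(xs @ [a]) @ [\<ominus> a] @ ys \<in> KM_gens R n" using g na by (auto simp: gens_mid)
    have "\<ominus> (a \<otimes> b) = (\<ominus> a) \<otimes> b" using a b by (simp add: l_minus)
    then have "symb R ((xs @ [a]) @ [\<ominus> (a \<otimes> b)] @ ys) = symb R ((xs @ [a]) @ [\<ominus> a] @ ys) \<otimes>\<^bsub>KM R n\<^esub> symb R ((xs @ [a]) @ [b] @ ys)"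
      using symb_mult[OF g2 b] by simp
    moreover have "symb R ((xs @ [a]) @ [\<ominus> a] @ ys) = \<one>\<^bsub>KM R n\<^esub>"
      using symb_neg_pair2[of xs a b ys n] g by simp
    ultimately show ?thesis using symb_in[of "xs @ [a]" b ys n] g by simp
  qed
  moreover have "symb R (xs @ [b] @ (\<ominus> (a \<otimes> b) # ys)) = symb R (xs @ [b, a] @ ys)"
  proof -
    have g2: "(xs @ [b]) @ [a] @ ys \<in> KM_gens R n" using g by (auto simp: gens_mid)
    have "\<ominus> (a \<otimes> b) = a \<otimes> (\<ominus> b)" using a b by (simp add: r_minus)
    then have "symb R ((xs @ [b]) @ [\<ominus> (a \<otimes> b)] @ ys) = symb R ((xs @ [b]) @ [a] @ ys) \<otimes>\<^bsub>KM R n\<^esub> symb R ((xs @ [b]) @ [\<ominus> b] @ ys)"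
      using symb_mult[OF g2 nb] by simp
    moreover have "symb R ((xs @ [b]) @ [\<ominus> b] @ ys) = \<one>\<^bsub>KM R n\<^esub>"
      using symb_neg_pair2[of xs b a ys n] g by (simp add: gens_mid)
    ultimately show ?thesis using symb_in[of "xs @ [b]" a ys n] g2 by simp
  qed
  ultimately show ?thesis by simp
qed

lemma symb_m1_sq:
  assumes g: "xs @ [a] @ ys \<in> KM_gens R n"
  shows "symb R (xs @ [\<ominus> \<one>] @ ys) \<otimes>\<^bsub>KM R n\<^esub> symb R (xs @ [\<ominus> \<one>] @ ys) = \<one>\<^bsub>KM R n\<^esub>"
proof -
  have m: "\<ominus> \<one> \<in> carrier R" "\<ominus> \<one> \<noteq> \<zero>" using neg_nz[of "\<one>"] by auto
  have g1: "xs @ [\<ominus> \<one>] @ ys \<in> KM_gens R n" using gens_replace[OF g m] .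
  have "(\<ominus> \<one>) \<otimes> (\<ominus> \<one>) = \<one>" by algebra
  then show ?thesis using symb_mult[OF g1 m] symb_one_entry[OF g] by simp
qed

lemma symb_aa:
  assumes g: "xs @ [a, b] @ ys \<in> KM_gens R n"
  shows "symb R (xs @ [a, a] @ ys) = symb R (xs @ [a, \<ominus> \<one>] @ ys)"
proof -
  interpret G: comm_group "KM R n" by (rule KM_comm)
  have a: "a \<in> carrier R" "a \<noteq> \<zero>" using g by (auto simp: gens_mid)
  have m: "\<ominus> \<one> \<in> carrier R" "\<ominus> \<one> \<noteq> \<zero>" using neg_nz[of "\<one>"] by auto
  have g1: "(xs @ [a]) @ [\<ominus> \<one>] @ ys \<in> KM_gens R n" using g m by (auto simp: gens_mid)
  have g2: "(xs @ [a]) @ [a] @ ys \<in> KM_gens R n" using g a by (auto simp: gens_mid)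
  have "\<ominus> a = (\<ominus> \<one>) \<otimes> a" using a by (simp add: l_minus)
  then have "symb R ((xs @ [a]) @ [\<ominus> a] @ ys) = symb R ((xs @ [a]) @ [\<ominus> \<one>] @ ys) \<otimes>\<^bsub>KM R n\<^esub> symb R ((xs @ [a]) @ [a] @ ys)"
    using symb_mult[OF g1 a] by simp
  moreover have "symb R ((xs @ [a]) @ [\<ominus> a] @ ys) = \<one>\<^bsub>KM R n\<^esub>" using symb_neg_pair2[OF g] by simp
  moreover have "symb R ((xs @ [a]) @ [\<ominus> \<one>] @ ys) \<otimes>\<^bsub>KM R n\<^esub> symb R ((xs @ [a]) @ [\<ominus> \<one>] @ ys) = \<one>\<^bsub>KM R n\<^esub>"
    using symb_m1_sq[OF g1] .
  ultimately have e1: "\<one>\<^bsub>KM R n\<^esub> = symb R (xs @ [a, \<ominus> \<one>] @ ys) \<otimes>\<^bsub>KM R n\<^esub> symb R (xs @ [a, a] @ ys)"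
    and e2: "symb R (xs @ [a, \<ominus> \<one>] @ ys) \<otimes>\<^bsub>KM R n\<^esub> symb R (xs @ [a, \<ominus> \<one>] @ ys) = \<one>\<^bsub>KM R n\<^esub>" by simp_all
  have c1: "symb R (xs @ [a, \<ominus> \<one>] @ ys) \<in> carrier (KM R n)" "symb R (xs @ [a, a] @ ys) \<in> carrier (KM R n)"
    using symb_in[OF g1] symb_in[OF g2] by simp_all
  have "symb R (xs @ [a, a] @ ys) = (symb R (xs @ [a, \<ominus> \<one>] @ ys) \<otimes>\<^bsub>KM R n\<^esub> symb R (xs @ [a, \<ominus> \<one>] @ ys)) \<otimes>\<^bsub>KM R n\<^esub> symb R (xs @ [a, a] @ ys)"
    using e2 c1 by simp
  also have "\<dots> = symb R (xs @ [a, \<ominus> \<one>] @ ys) \<otimes>\<^bsub>KM R n\<^esub> \<one>\<^bsub>KM R n\<^esub>"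
    using e1 c1 by (simp add: G.m_assoc)
  finally show ?thesis using c1 by simp
qed

subsection \<open>Left multiplication\<close>

lemma lmul_prop:
  assumes u: "u \<in> carrier R" "u \<noteq> \<zero>"
  shows "lmul R n u \<in> hom (KM R n) (KM R (Suc n)) \<and> (\<forall>us\<in>KM_gens R n. lmul R n u (symb R us) = symb R (u # us))"
proof -
  have "\<exists>h\<in>hom (KM R n) (KM R (Suc n)). \<forall>us\<in>KM_gens R n. h (symb R us) = symb R (u # us)"
  proof (rule KM_universal[OF KM_comm])
  fix us assume "us \<in> KM_gens R n"
  then have "u # us \<in> KM_gens R (Suc n)" using u by (auto simp: KM_gens_iff)
  then show "symb R (u # us) \<in> carrier (KM R (Suc n))" by (rule symb_carrier)
next
  fix xs a b ys
  assume g: "xs @ [a] @ ys \<in> KM_gens R n" "xs @ [b] @ ys \<in> KM_gens R n" "xs @ [a \<otimes> b] @ ys \<in> KM_gens R n"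
  then have "(u # xs) @ [a] @ ys \<in> KM_gens R (Suc n)" "(u # xs) @ [b] @ ys \<in> KM_gens R (Suc n)"
     "(u # xs) @ [a \<otimes> b] @ ys \<in> KM_gens R (Suc n)" using u by (auto simp: KM_gens_iff)
  from symb_mult_gen[OF this]
  show "symb R (u # xs @ [a \<otimes> b] @ ys) = symb R (u # xs @ [a] @ ys) \<otimes>\<^bsub>KM R (Suc n)\<^esub> symb R (u # xs @ [b] @ ys)"
    by simp
next
  fix xs a b ys
  assume g: "xs @ [a, b] @ ys \<in> KM_gens R n" "a \<oplus> b = \<one>"
  then have "(u # xs) @ [a, b] @ ys \<in> KM_gens R (Suc n)" using u by (auto simp: KM_gens_iff)
  from symb_steinberg_gen[OF this g(2)]
  show "symb R (u # xs @ [a, b] @ ys) = \<one>\<^bsub>KM R (Suc n)\<^esub>" by simp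
qed
  then have "\<exists>h. h \<in> hom (KM R n) (KM R (Suc n)) \<and> (\<forall>us\<in>KM_gens R n. h (symb R us) = symb R (u # us))" by blast
  from someI_ex[OF this] show ?thesis unfolding lmul_def .
qed

lemma lmul_hom: "u \<in> carrier R \<Longrightarrow> u \<noteq> \<zero> \<Longrightarrow> lmul R n u \<in> hom (KM R n) (KM R (Suc n))"
  using lmul_prop[of u n] by (rule conjunct1)

lemma lmul_symb: "u \<in> carrier R \<Longrightarrow> u \<noteq> \<zero> \<Longrightarrow> us \<in> KM_gens R n \<Longrightarrow> lmul R n u (symb R us) = symb R (u # us)"
  using lmul_prop[of u n] by auto

lemma lmul_closed: "u \<in> carrier R \<Longrightarrow> u \<noteq> \<zero> \<Longrightarrow> x \<in> carrier (KM R n) \<Longrightarrow> lmul R n u x \<in> carrier (KM R (Suc n))"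
  using hom_in_carrier[OF lmul_hom] by metis

lemma lmul_gh: "u \<in> carrier R \<Longrightarrow> u \<noteq> \<zero> \<Longrightarrow> group_hom (KM R n) (KM R (Suc n)) (lmul R n u)"
  by (simp add: group_hom_def group_hom_axioms_def KM_group lmul_hom)

lemma lmul_scalar_mult:
  assumes a: "a \<in> carrier R" "a \<noteq> \<zero>" and b: "b \<in> carrier R" "b \<noteq> \<zero>" and x: "x \<in> carrier (KM R n)"
  shows "lmul R n (a \<otimes> b) x = lmul R n a x \<otimes>\<^bsub>KM R (Suc n)\<^esub> lmul R n b x"
proof (rule KM_hom_eq[OF KM_group _ _ _ x])
  have ab: "a \<otimes> b \<in> carrier R" "a \<otimes> b \<noteq> \<zero>" using a b nz_mult by auto
  show "lmul R n (a \<otimes> b) \<in> hom (KM R n) (KM R (Suc n))" using lmul_hom[OF ab] .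
  show "(\<lambda>x. lmul R n a x \<otimes>\<^bsub>KM R (Suc n)\<^esub> lmul R n b x) \<in> hom (KM R n) (KM R (Suc n))"
    using comm_group.hom_group_mult[OF KM_comm lmul_hom[OF a] lmul_hom[OF b]] .
  fix us assume us: "us \<in> KM_gens R n"
  have g: "[] @ [a] @ us \<in> KM_gens R (Suc n)" using us a by (auto simp: KM_gens_iff)
  show "lmul R n (a \<otimes> b) (symb R us) = lmul R n a (symb R us) \<otimes>\<^bsub>KM R (Suc n)\<^esub> lmul R n b (symb R us)"
    using lmul_symb[OF ab us] lmul_symb[OF a us] lmul_symb[OF b us] symb_mult[OF g b] by simp
qed

lemma lmul_one:
  assumes x: "x \<in> carrier (KM R n)"
  shows "lmul R n \<one> x = \<one>\<^bsub>KM R (Suc n)\<^esub>"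
proof (rule KM_hom_eq[OF KM_group _ _ _ x])
  show "lmul R n \<one> \<in> hom (KM R n) (KM R (Suc n))" using lmul_hom[of "\<one>"] by simp
  show "(\<lambda>x. \<one>\<^bsub>KM R (Suc n)\<^esub>) \<in> hom (KM R n) (KM R (Suc n))" using trivial_hom[OF KM_group] .
  fix us assume us: "us \<in> KM_gens R n"
  have g: "[] @ [\<one>] @ us \<in> KM_gens R (Suc n)" using us by (auto simp: KM_gens_iff)
  show "lmul R n \<one> (symb R us) = \<one>\<^bsub>KM R (Suc n)\<^esub>"
    using lmul_symb[of "\<one>" us n] us symb_one_entry[OF g] by simp
qed

lemma lmul_lmul_eq_one:
  assumes a: "a \<in> carrier R" "a \<noteq> \<zero>" and b: "b \<in> carrier R" "b \<noteq> \<zero>"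
    and symb1: "\<And>us. us \<in> KM_gens R n \<Longrightarrow> symb R (a # b # us) = \<one>\<^bsub>KM R (Suc (Suc n))\<^esub>"
    and x: "x \<in> carrier (KM R n)"
  shows "lmul R (Suc n) a (lmul R n b x) = \<one>\<^bsub>KM R (Suc (Suc n))\<^esub>"
proof -
  have "(lmul R (Suc n) a \<circ> lmul R n b) x = (\<lambda>x. \<one>\<^bsub>KM R (Suc (Suc n))\<^esub>) x"
  proof (rule KM_hom_eq[OF KM_group _ _ _ x])
    show "lmul R (Suc n) a \<circ> lmul R n b \<in> hom (KM R n) (KM R (Suc (Suc n)))"
      using hom_compose[OF lmul_hom[OF b] lmul_hom[OF a]] .
    show "(\<lambda>x. \<one>\<^bsub>KM R (Suc (Suc n))\<^esub>) \<in> hom (KM R n) (KM R (Suc (Suc n)))" using trivial_hom[OF KM_group] .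
    fix us assume us: "us \<in> KM_gens R n"
    have "b # us \<in> KM_gens R (Suc n)" using us b by (auto simp: KM_gens_iff)
    then show "(lmul R (Suc n) a \<circ> lmul R n b) (symb R us) = \<one>\<^bsub>KM R (Suc (Suc n))\<^esub>"
      using lmul_symb[OF b us] lmul_symb[OF a] symb1[OF us] by simp
  qed
  then show ?thesis by simp
qed

lemma lmul_steinberg:
  assumes a: "a \<in> carrier R" "a \<noteq> \<zero>" and b: "b \<in> carrier R" "b \<noteq> \<zero>" and s: "a \<oplus> b = \<one>"
    and x: "x \<in> carrier (KM R n)"
  shows "lmul R (Suc n) a (lmul R n b x) = \<one>\<^bsub>KM R (Suc (Suc n))\<^esub>"
proof (rule lmul_lmul_eq_one[OF a b _ x])
  fix us assume "us \<in> KM_gens R n"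
  then have "[] @ [a, b] @ us \<in> KM_gens R (Suc (Suc n))" using a b by (auto simp: KM_gens_iff)
  from symb_steinberg[OF this s] show "symb R (a # b # us) = \<one>\<^bsub>KM R (Suc (Suc n))\<^esub>" by simp
qed

lemma lmul_neg:
  assumes a: "a \<in> carrier R" "a \<noteq> \<zero>" and x: "x \<in> carrier (KM R n)"
  shows "lmul R (Suc n) a (lmul R n (\<ominus> a) x) = \<one>\<^bsub>KM R (Suc (Suc n))\<^esub>"
proof (rule lmul_lmul_eq_one[OF a neg_nz[OF a, THEN conjunct1] neg_nz[OF a, THEN conjunct2] _ x])
  fix us assume "us \<in> KM_gens R n"
  then have "[] @ [a] @ us \<in> KM_gens R (Suc n)" using a by (auto simp: KM_gens_iff)
  from symb_neg_pair[OF this] show "symb R (a # \<ominus> a # us) = \<one>\<^bsub>KM R (Suc (Suc n))\<^esub>" by simp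
qed

lemma lmul_anti:
  assumes a: "a \<in> carrier R" "a \<noteq> \<zero>" and b: "b \<in> carrier R" "b \<noteq> \<zero>"
    and x: "x \<in> carrier (KM R n)"
  shows "lmul R (Suc n) a (lmul R n b x) \<otimes>\<^bsub>KM R (Suc (Suc n))\<^esub> lmul R (Suc n) b (lmul R n a x) = \<one>\<^bsub>KM R (Suc (Suc n))\<^esub>"
proof -
  interpret G: comm_group "KM R (Suc (Suc n))" by (rule KM_comm)
  have "(\<lambda>x. (lmul R (Suc n) a \<circ> lmul R n b) x \<otimes>\<^bsub>KM R (Suc (Suc n))\<^esub> (lmul R (Suc n) b \<circ> lmul R n a) x) x = (\<lambda>x. \<one>\<^bsub>KM R (Suc (Suc n))\<^esub>) x"
  proof (rule KM_hom_eq[OF KM_group _ _ _ x])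
    show "(\<lambda>x. (lmul R (Suc n) a \<circ> lmul R n b) x \<otimes>\<^bsub>KM R (Suc (Suc n))\<^esub> (lmul R (Suc n) b \<circ> lmul R n a) x) \<in> hom (KM R n) (KM R (Suc (Suc n)))"
      using G.hom_group_mult[OF hom_compose[OF lmul_hom[OF b] lmul_hom[OF a]] hom_compose[OF lmul_hom[OF a] lmul_hom[OF b]]] .
    show "(\<lambda>x. \<one>\<^bsub>KM R (Suc (Suc n))\<^esub>) \<in> hom (KM R n) (KM R (Suc (Suc n)))" using trivial_hom[OF KM_group] .
    fix us assume us: "us \<in> KM_gens R n"
    have g: "[] @ [a, b] @ us \<in> KM_gens R (Suc (Suc n))" using us a b by (auto simp: KM_gens_iff)
    have "b # us \<in> KM_gens R (Suc n)" "a # us \<in> KM_gens R (Suc n)" using us a b by (auto simp: KM_gens_iff)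
    then show "(\<lambda>x. (lmul R (Suc n) a \<circ> lmul R n b) x \<otimes>\<^bsub>KM R (Suc (Suc n))\<^esub> (lmul R (Suc n) b \<circ> lmul R n a) x) (symb R us) = \<one>\<^bsub>KM R (Suc (Suc n))\<^esub>"
      using lmul_symb[OF b us] lmul_symb[OF a us] lmul_symb[OF a] lmul_symb[OF b] symb_swap[OF g] by simp
  qed
  then show ?thesis by simp
qed

lemma lmul_m1_sq:
  assumes x: "x \<in> carrier (KM R n)"
  shows "lmul R n (\<ominus> \<one>) x \<otimes>\<^bsub>KM R (Suc n)\<^esub> lmul R n (\<ominus> \<one>) x = \<one>\<^bsub>KM R (Suc n)\<^esub>"
proof -
  have m: "\<ominus> \<one> \<in> carrier R" "\<ominus> \<one> \<noteq> \<zero>" using neg_nz[of "\<one>"] by auto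
  have "(\<ominus> \<one>) \<otimes> (\<ominus> \<one>) = \<one>" by algebra
  then show ?thesis using lmul_scalar_mult[OF m m x] lmul_one[OF x] by simp
qed

end




section \<open>The field F as a ring record\<close>

lemma sub_simps [simp]:
  "carrier (fieldR\<lparr>carrier := S\<rparr>) = S"
  "x \<otimes>\<^bsub>fieldR\<lparr>carrier := S\<rparr>\<^esub> y = x * y"
  "x \<oplus>\<^bsub>fieldR\<lparr>carrier := S\<rparr>\<^esub> y = x + y"
  "\<one>\<^bsub>fieldR\<lparr>carrier := S\<rparr>\<^esub> = 1"
  "\<zero>\<^bsub>fieldR\<lparr>carrier := S\<rparr>\<^esub> = 0"
  by (simp_all add: fieldR_def)

lemma fieldR_simps [simp]:
  "carrier (fieldR :: 'a::field ring) = UNIV"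
  "x \<otimes>\<^bsub>fieldR\<^esub> y = x * y"
  "x \<oplus>\<^bsub>fieldR\<^esub> y = x + y"
  "\<one>\<^bsub>fieldR\<^esub> = 1"
  "\<zero>\<^bsub>fieldR\<^esub> = 0"
  by (simp_all add: fieldR_def)

lemma cring_sub:
  fixes S :: "'a::field set"
  assumes "0 \<in> S" "1 \<in> S" "\<And>x y. x \<in> S \<Longrightarrow> y \<in> S \<Longrightarrow> x + y \<in> S"
    "\<And>x y. x \<in> S \<Longrightarrow> y \<in> S \<Longrightarrow> x * y \<in> S" "\<And>x. x \<in> S \<Longrightarrow> - x \<in> S"
  shows "cring (fieldR\<lparr>carrier := S\<rparr>)"
proof (rule cringI)
  show "abelian_group (fieldR\<lparr>carrier := S\<rparr>)"
    by (rule abelian_groupI) (auto simp: assms algebra_simps intro!: bexI[of _ "- _"])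
  show "comm_monoid (fieldR\<lparr>carrier := S\<rparr>)"
    by (rule comm_monoidI) (auto simp: assms algebra_simps)
qed (simp add: algebra_simps)

lemma cring_fieldR: "cring (fieldR :: 'a::field ring)"
proof (rule cringI)
  show "abelian_group (fieldR :: 'a ring)"
    by (rule abelian_groupI) (auto simp: algebra_simps intro: exI[of _ "- _"])
  show "comm_monoid (fieldR :: 'a ring)"
    by (rule comm_monoidI) (auto simp: algebra_simps)
qed (simp add: algebra_simps)

lemma field_fieldR: "field (fieldR :: 'a::field ring)"
proof -
  interpret cring "fieldR :: 'a ring" by (rule cring_fieldR)
  show ?thesis
  proof (rule cring_fieldI2)
    fix a :: 'a assume "a \<in> carrier fieldR" "a \<noteq> \<zero>\<^bsub>fieldR\<^esub>"
    then show "\<exists>b\<in>carrier fieldR. a \<otimes>\<^bsub>fieldR\<^esub> b = \<one>\<^bsub>fieldR\<^esub>"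
      by (auto intro!: exI[of _ "inverse a"])
  qed simp
qed

lemma fieldR_a_inv [simp]: "\<ominus>\<^bsub>(fieldR :: 'a::field ring)\<^esub> x = - x"
proof -
  interpret cring "fieldR :: 'a ring" by (rule cring_fieldR)
  show ?thesis by (rule minus_equality) auto
qed

lemma sub_a_inv:
  fixes S :: "'a::field set"
  assumes "0 \<in> S" "1 \<in> S" "\<And>x y. x \<in> S \<Longrightarrow> y \<in> S \<Longrightarrow> x + y \<in> S"
    "\<And>x y. x \<in> S \<Longrightarrow> y \<in> S \<Longrightarrow> x * y \<in> S" "\<And>x. x \<in> S \<Longrightarrow> - x \<in> S" and x: "x \<in> S"
  shows "\<ominus>\<^bsub>fieldR\<lparr>carrier := S\<rparr>\<^esub> x = - x"
proof -
  interpret cring "fieldR\<lparr>carrier := S\<rparr>" by (rule cring_sub[OF assms(1-5)])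
  show ?thesis by (rule minus_equality) (auto simp: x assms)
qed

context comm_group
begin

lemma cg1:
  assumes "S \<in> carrier G" "Lm \<in> carrier G" "La \<in> carrier G" "Lb \<in> carrier G"
  shows "S [^] (i + j::int) \<otimes> Lm [^] (i + j) \<otimes> inv (La \<otimes> Lb)
       = (S [^] i \<otimes> Lm [^] i \<otimes> inv La) \<otimes> (S [^] j \<otimes> Lm [^] j \<otimes> inv Lb)"
  using assms by (simp add: int_pow_mult inv_mult m_ac)

lemma cg2:
  assumes "A \<in> carrier G" "B \<in> carrier G" "P \<in> carrier G" "Q \<in> carrier G" "U \<in> carrier G" "W \<in> carrier G"
  shows "(A \<otimes> B) [^] (i::int) \<otimes> (P \<otimes> Q) [^] i \<otimes> inv (U \<otimes> W)
       = (A [^] i \<otimes> P [^] i \<otimes> inv U) \<otimes> (B [^] i \<otimes> Q [^] i \<otimes> inv W)"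
  using assms by (simp add: int_pow_distrib inv_mult m_ac)

lemma sq_one_even_pow:
  assumes x: "x \<in> carrier G" and sq: "x \<otimes> x = \<one>" and e: "even (i::int)"
  shows "x [^] i = \<one>"
proof -
  obtain j where j: "i = 2 * j" using e by blast
  have "x [^] (2::int) = x \<otimes> x" using x int_pow_mult[OF x, of 1 1] by simp
  then have "x [^] i = (x \<otimes> x) [^] j" using int_pow_pow[OF x, of 2 j] j by simp
  then show ?thesis using sq by simp
qed

lemma cg_hard:
  assumes c: "p \<in> carrier G" "q \<in> carrier G" "r \<in> carrier G" "s \<in> carrier G" "t \<in> carrier G"
    and pp: "p \<otimes> p = \<one>" and rr: "r \<otimes> r = \<one>" and st: "s \<otimes> t = \<one>"
  shows "(p \<otimes> q) [^] (e::int) \<otimes> (p [^] e \<otimes> r [^] e \<otimes> inv (r \<otimes> s)) [^] e \<otimes> inv (q [^] e \<otimes> t [^] e \<otimes> inv \<one>) = \<one>"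
proof -
  have ir: "inv r = r" using rr c by (simp add: inv_equality)
  have iss: "inv s = t" using st c by (simp add: inv_equality m_comm)
  have irs: "inv (r \<otimes> s) = r \<otimes> t" using inv_mult c ir iss by simp
  let ?X = "(p \<otimes> q) [^] (e::int) \<otimes> (p [^] e \<otimes> r [^] e \<otimes> inv (r \<otimes> s)) [^] e \<otimes> inv (q [^] e \<otimes> t [^] e \<otimes> inv \<one>)"
  have "?X = (p [^] e \<otimes> q [^] e) \<otimes> ((p [^] e) [^] e \<otimes> (r [^] e) [^] e \<otimes> (r [^] e \<otimes> t [^] e)) \<otimes> (inv (q [^] e) \<otimes> inv (t [^] e))"
    using c by (simp add: irs int_pow_distrib inv_mult)
  also have "\<dots> = (p [^] e \<otimes> p [^] (e * e)) \<otimes> (r [^] (e * e) \<otimes> r [^] e) \<otimes> (q [^] e \<otimes> inv (q [^] e)) \<otimes> (t [^] e \<otimes> inv (t [^] e))"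
    using c by (simp only: int_pow_pow m_ac int_pow_closed inv_closed m_closed)
  also have "\<dots> = (p [^] e \<otimes> p [^] (e * e)) \<otimes> (r [^] (e * e) \<otimes> r [^] e) \<otimes> \<one> \<otimes> \<one>"
    using c by (simp only: r_inv int_pow_closed)
  also have "\<dots> = p [^] (e + e * e) \<otimes> r [^] (e * e + e)"
    using c by (simp add: int_pow_mult)
  also have "p [^] (e + e * e) = \<one>" by (rule sq_one_even_pow[OF c(1) pp]) simp
  also have "r [^] (e * e + e) = \<one>" by (rule sq_one_even_pow[OF c(3) rr]) simp
  finally show ?thesis by simp
qed

end

section \<open>Discrete valuations\<close>

locale dvr =
  fixes v :: "'a::field \<Rightarrow> int"
  assumes dv: "discrete_valuation v"
begin

lemma v_mult: "x \<noteq> 0 \<Longrightarrow> y \<noteq> 0 \<Longrightarrow> v (x * y) = v x + v y"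
  using dv unfolding discrete_valuation_def by blast

lemma v_add: "x \<noteq> 0 \<Longrightarrow> y \<noteq> 0 \<Longrightarrow> x + y \<noteq> 0 \<Longrightarrow> v (x + y) \<ge> min (v x) (v y)"
  using dv unfolding discrete_valuation_def by blast

lemma v_one [simp]: "v 1 = 0"
  using v_mult[of 1 1] by simp

lemma v_m1 [simp]: "v (-1) = 0"
  using v_mult[of "-1" "-1"] by simp

lemma v_neg [simp]: "v (- x) = v x" if "x \<noteq> 0"
  using v_mult[of "-1" x] that by simp

lemma v_inverse: "x \<noteq> 0 \<Longrightarrow> v (inverse x) = - v x"
  using v_mult[of x "inverse x"] by simp

lemma v_divide: "x \<noteq> 0 \<Longrightarrow> y \<noteq> 0 \<Longrightarrow> v (x / y) = v x - v y"
  by (simp add: divide_inverse v_mult v_inverse)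

lemma v_strict:
  assumes "x \<noteq> 0" "y \<noteq> 0" "v x < v y"
  shows "x + y \<noteq> 0 \<and> v (x + y) = v x"
proof -
  have s: "x + y \<noteq> 0"
  proof
    assume "x + y = 0"
    then have "y = - x" by (simp add: eq_neg_iff_add_eq_0 add.commute)
    then show False using assms by simp
  qed
  have "v (x + y) \<ge> v x" using v_add[OF assms(1,2) s] assms(3) by simp
  moreover have "v x \<ge> min (v (x + y)) (v (- y))"
    using v_add[OF s, of "- y"] assms by simp
  then have "v x \<ge> v (x + y)" using assms by auto
  ultimately show ?thesis using s by simp
qed

definition pi :: 'a where "pi = (SOME p. p \<noteq> 0 \<and> v p = 1)"

lemma pi: "pi \<noteq> 0" "v pi = 1"
proof -
  have "\<exists>p. p \<noteq> 0 \<and> v p = 1" using dv unfolding discrete_valuation_def by blast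
  from someI_ex[OF this] show "pi \<noteq> 0" "v pi = 1" unfolding pi_def by auto
qed

lemma v_power: "p \<noteq> 0 \<Longrightarrow> v (p ^ n) = int n * v p"
  by (induction n) (auto simp: v_mult algebra_simps)

lemma v_powi: "p \<noteq> 0 \<Longrightarrow> v (p powi k) = k * v p"
proof (cases "k \<ge> 0")
  case True
  assume p: "p \<noteq> 0"
  then show ?thesis using True v_power[OF p, of "nat k"] by (simp add: power_int_def)
next
  case False
  assume p: "p \<noteq> 0"
  then show ?thesis using False v_power[OF p, of "nat (- k)"] v_inverse[of "p ^ nat (- k)"]
    by (simp add: power_int_def power_inverse)
qed

definition up :: "'a \<Rightarrow> 'a" where "up x = x / pi powi (v x)"

lemma pi_powi_nz: "pi powi k \<noteq> 0" using pi by simp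

lemma up_nz: "x \<noteq> 0 \<Longrightarrow> up x \<noteq> 0"
  unfolding up_def using pi_powi_nz by simp

lemma v_up: "x \<noteq> 0 \<Longrightarrow> v (up x) = 0"
  unfolding up_def using v_divide[OF _ pi_powi_nz] v_powi pi by simp

lemma up_decomp: "x = pi powi (v x) * up x"
  unfolding up_def using pi_powi_nz by simp

lemma up_mult: "x \<noteq> 0 \<Longrightarrow> y \<noteq> 0 \<Longrightarrow> up (x * y) = up x * up y"
  unfolding up_def using pi by (simp add: v_mult power_int_add)

lemma up_unit: "v x = 0 \<Longrightarrow> up x = x"
  unfolding up_def by simp

lemma vr_add: "x \<in> val_ring v \<Longrightarrow> y \<in> val_ring v \<Longrightarrow> x + y \<in> val_ring v"
proof -
  assume x: "x \<in> val_ring v" and y: "y \<in> val_ring v"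
  show ?thesis
  proof (cases "x = 0 \<or> y = 0 \<or> x + y = 0")
    case True then show ?thesis using x y by (auto simp: val_ring_def)
  next
    case False
    then show ?thesis using v_add[of x y] x y by (auto simp: val_ring_def)
  qed
qed

lemma vr_mult: "x \<in> val_ring v \<Longrightarrow> y \<in> val_ring v \<Longrightarrow> x * y \<in> val_ring v"
  by (auto simp: val_ring_def v_mult)

lemma vr_neg: "x \<in> val_ring v \<Longrightarrow> - x \<in> val_ring v"
  by (cases "x = 0") (auto simp: val_ring_def)

lemma vr_0: "0 \<in> val_ring v" and vr_1: "1 \<in> val_ring v"
  by (auto simp: val_ring_def)

lemma cring_valR: "cring (valR v)"
  unfolding valR_def by (rule cring_sub[OF vr_0 vr_1 vr_add vr_mult vr_neg])

lemma valR_simps [simp]: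
  "carrier (valR v) = val_ring v"
  "x \<otimes>\<^bsub>valR v\<^esub> y = x * y"
  "x \<oplus>\<^bsub>valR v\<^esub> y = x + y"
  "\<one>\<^bsub>valR v\<^esub> = 1"
  "\<zero>\<^bsub>valR v\<^esub> = 0"
  by (simp_all add: valR_def)

lemma valR_a_inv: "x \<in> val_ring v \<Longrightarrow> \<ominus>\<^bsub>valR v\<^esub> x = - x"
  unfolding valR_def by (rule sub_a_inv[OF vr_0 vr_1 vr_add vr_mult vr_neg])

lemma mpow_sub: "mpow v k \<subseteq> val_ring v"
  by (auto simp: mpow_def val_ring_def)

lemma ideal_m: "ideal (mpow v 1) (valR v)"
proof -
  interpret R: cring "valR v" by (rule cring_valR)
  show ?thesis
  proof (rule idealI[OF R.ring_axioms])
    show "subgroup (mpow v 1) (add_monoid (valR v))"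
      apply (rule R.add.subgroupI)
      subgoal using mpow_sub by simp
      subgoal by (auto simp: mpow_def)
      subgoal for a
        using valR_a_inv[of a] by (cases "a = 0") (auto simp: a_inv_def mpow_def val_ring_def)
      subgoal for a b
        using v_add[of a b] by (cases "a = 0 \<or> b = 0 \<or> a + b = 0") (auto simp: mpow_def)
      done
  next
    fix a x assume "a \<in> mpow v 1" "x \<in> carrier (valR v)"
    then show "x \<otimes>\<^bsub>valR v\<^esub> a \<in> mpow v 1" by (auto simp: mpow_def val_ring_def v_mult)
  next
    fix a x assume "a \<in> mpow v 1" "x \<in> carrier (valR v)"
    then show "a \<otimes>\<^bsub>valR v\<^esub> x \<in> mpow v 1" by (auto simp: mpow_def val_ring_def v_mult)
  qed
qed

lemma maximal_m: "maximalideal (mpow v 1) (valR v)"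
proof (rule maximalidealI[OF ideal_m])
  show "carrier (valR v) \<noteq> mpow v 1" using vr_1 by (auto simp: mpow_def)
next
  fix J assume J: "ideal J (valR v)" "mpow v 1 \<subseteq> J" "J \<subseteq> carrier (valR v)"
  interpret J: ideal J "valR v" by (rule J(1))
  show "J = mpow v 1 \<or> J = carrier (valR v)"
  proof (cases "J = mpow v 1")
    case False
    then obtain x where x: "x \<in> J" "x \<notin> mpow v 1" using J(2) by blast
    then have xv: "x \<in> val_ring v" using J(3) by auto
    then have x0: "x \<noteq> 0" "v x = 0" using x(2) by (auto simp: mpow_def val_ring_def)
    have ix: "inverse x \<in> val_ring v" using x0 v_inverse[of x] by (auto simp: val_ring_def)
    have "inverse x * x \<in> J" using J.I_l_closed[OF x(1), of "inverse x"] ix by simp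
    then have one: "1 \<in> J" using x0 by simp
    have "carrier (valR v) \<subseteq> J"
    proof
      fix y assume "y \<in> carrier (valR v)"
      then show "y \<in> J" using J.I_l_closed[OF one, of y] by simp
    qed
    then show ?thesis using J(3) by blast
  qed simp
qed

lemma field_res: "field (resfield v)"
  unfolding resfield_def by (rule maximalideal.quotient_is_field[OF maximal_m cring_valR])

sublocale k: field "resfield v" by (rule field_res)

lemma res_hom: "ring_hom_ring (valR v) (resfield v) (res v)"
proof -
  have "res v = (+>\<^bsub>valR v\<^esub>) (mpow v 1)" unfolding res_def by (rule ext) simp
  then show ?thesis unfolding resfield_def using ideal.rcos_ring_hom_ring[OF ideal_m] by simp
qed

lemma res_mult: "x \<in> val_ring v \<Longrightarrow> y \<in> val_ring v \<Longrightarrow> res v (x * y) = res v x \<otimes>\<^bsub>resfield v\<^esub> res v y"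
proof -
  interpret h: ring_hom_ring "valR v" "resfield v" "res v" by (rule res_hom)
  show "x \<in> val_ring v \<Longrightarrow> y \<in> val_ring v \<Longrightarrow> ?thesis" using h.hom_mult[of x y] by simp
qed

lemma res_add: "x \<in> val_ring v \<Longrightarrow> y \<in> val_ring v \<Longrightarrow> res v (x + y) = res v x \<oplus>\<^bsub>resfield v\<^esub> res v y"
proof -
  interpret h: ring_hom_ring "valR v" "resfield v" "res v" by (rule res_hom)
  show "x \<in> val_ring v \<Longrightarrow> y \<in> val_ring v \<Longrightarrow> ?thesis" using h.hom_add[of x y] by simp
qed

lemma res_one: "res v 1 = \<one>\<^bsub>resfield v\<^esub>"
proof -
  interpret h: ring_hom_ring "valR v" "resfield v" "res v" by (rule res_hom)
  show ?thesis using h.hom_one by simp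
qed

lemma res_neg: "x \<in> val_ring v \<Longrightarrow> res v (- x) = \<ominus>\<^bsub>resfield v\<^esub> res v x"
proof -
  interpret h: ring_hom_ring "valR v" "resfield v" "res v" by (rule res_hom)
  show "x \<in> val_ring v \<Longrightarrow> ?thesis" using h.hom_a_inv[of x] valR_a_inv[of x] by simp
qed

lemma res_carrier: "x \<in> val_ring v \<Longrightarrow> res v x \<in> carrier (resfield v)"
proof -
  interpret h: ring_hom_ring "valR v" "resfield v" "res v" by (rule res_hom)
  show "x \<in> val_ring v \<Longrightarrow> ?thesis" using h.hom_closed[of x] by simp
qed

lemma res_zero_iff: "x \<in> val_ring v \<Longrightarrow> res v x = \<zero>\<^bsub>resfield v\<^esub> \<longleftrightarrow> x \<in> mpow v 1"
proof -
  assume x: "x \<in> val_ring v"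
  interpret I: ideal "mpow v 1" "valR v" by (rule ideal_m)
  have z: "\<zero>\<^bsub>resfield v\<^esub> = mpow v 1" unfolding resfield_def by (simp add: FactRing_def)
  show ?thesis
  proof
    assume "res v x = \<zero>\<^bsub>resfield v\<^esub>"
    then have "mpow v 1 +>\<^bsub>valR v\<^esub> x = mpow v 1" using z res_def by metis
    moreover have "x \<in> mpow v 1 +>\<^bsub>valR v\<^esub> x" using I.a_rcos_self x by simp
    ultimately show "x \<in> mpow v 1" by simp
  next
    assume "x \<in> mpow v 1"
    then show "res v x = \<zero>\<^bsub>resfield v\<^esub>" using I.a_rcos_const z res_def by metis
  qed
qed

lemma unit_vr: "x \<noteq> 0 \<Longrightarrow> v x = 0 \<Longrightarrow> x \<in> val_ring v"
  by (simp add: val_ring_def)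

lemma res_unit_nz: "x \<noteq> 0 \<Longrightarrow> v x = 0 \<Longrightarrow> res v x \<in> carrier (resfield v) \<and> res v x \<noteq> \<zero>\<^bsub>resfield v\<^esub>"
  using res_carrier[of x] res_zero_iff[of x] by (simp add: val_ring_def mpow_def)

definition rs :: "'a \<Rightarrow> 'a set" where "rs x = res v (up x)"

lemma up_vr: "x \<noteq> 0 \<Longrightarrow> up x \<in> val_ring v"
  using v_up by (simp add: val_ring_def)

lemma rs_nz: "x \<noteq> 0 \<Longrightarrow> rs x \<in> carrier (resfield v) \<and> rs x \<noteq> \<zero>\<^bsub>resfield v\<^esub>"
  unfolding rs_def using res_unit_nz[OF up_nz v_up] by simp

lemma rs_mult: "x \<noteq> 0 \<Longrightarrow> y \<noteq> 0 \<Longrightarrow> rs (x * y) = rs x \<otimes>\<^bsub>resfield v\<^esub> rs y"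
  unfolding rs_def using up_mult res_mult up_vr by simp

lemma rs_unit: "v x = 0 \<Longrightarrow> rs x = res v x"
  unfolding rs_def using up_unit by simp

lemma pos_val_other:
  assumes "a \<noteq> 0" "b \<noteq> 0" "a + b = 1" "v a > 0"
  shows "v b = 0 \<and> rs b = \<one>\<^bsub>resfield v\<^esub>"
proof -
  have b: "b = 1 + (- a)" using assms(3) by (simp add: algebra_simps)
  have vb: "v b = 0" using v_strict[of 1 "- a"] assms b by simp
  have "res v (- a) = \<zero>\<^bsub>resfield v\<^esub>" using res_zero_iff[of "- a"] assms
    by (simp add: mpow_def val_ring_def)
  then have "res v b = \<one>\<^bsub>resfield v\<^esub>"
    using res_add[of 1 "- a"] res_one b assms vr_1 field.is_ring[OF field_res] res_carrier[OF vr_1]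
    by (simp add: val_ring_def)
  then show ?thesis using vb rs_unit by simp
qed

lemma neg_val_other:
  assumes "a \<noteq> 0" "b \<noteq> 0" "a + b = 1" "v a < 0"
  shows "v b = v a"
proof -
  have b: "b = (- a) + 1" using assms(3) by (simp add: algebra_simps)
  show ?thesis using v_strict[of "- a" 1] assms b by simp
qed

lemma stein_cases:
  assumes a: "a \<noteq> 0" and b: "b \<noteq> 0" and s: "a + b = 1"
  shows "(v a > 0 \<and> v b = 0 \<and> rs b = \<one>\<^bsub>resfield v\<^esub>) \<or> (v b > 0 \<and> v a = 0 \<and> rs a = \<one>\<^bsub>resfield v\<^esub>)
    \<or> (v a = 0 \<and> v b = 0 \<and> rs a \<oplus>\<^bsub>resfield v\<^esub> rs b = \<one>\<^bsub>resfield v\<^esub>)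
    \<or> (v a < 0 \<and> v b = v a \<and> rs b = \<ominus>\<^bsub>resfield v\<^esub> rs a)"
proof -
  have s': "b + a = 1" using s by (simp add: add.commute)
  consider "v a > 0" | "v a < 0" | "v a = 0" "v b > 0" | "v a = 0" "v b = 0" | "v a = 0" "v b < 0" by linarith
  then show ?thesis
  proof cases
    case 1 then show ?thesis using pos_val_other[OF a b s] by simp
  next
    case 3 then show ?thesis using pos_val_other[OF b a s'] by simp
  next
    case 5 then show ?thesis using neg_val_other[OF b a s'] by simp
  next
    case 4
    then have "rs a \<oplus>\<^bsub>resfield v\<^esub> rs b = res v (a + b)"
      using rs_unit res_add a b by (simp add: val_ring_def)
    then show ?thesis using 4 s res_one by simp
  next
    case 2
    define e where "e = v a"
    have vb: "v b = e" using neg_val_other[OF a b s 2] e_def by simp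
    have "up a + up b = 1 / pi powi e" unfolding up_def using vb e_def s
      by (simp add: add_divide_distrib[symmetric])
    also have "\<dots> = pi powi (- e)" by (simp add: power_int_minus divide_inverse)
    finally have ub: "up b = pi powi (- e) + (- up a)" by (simp add: algebra_simps)
    have vp: "v (pi powi (- e)) = - e" using v_powi[of pi "- e"] pi by simp
    have pv: "pi powi (- e) \<in> val_ring v" "pi powi (- e) \<in> mpow v 1"
      using vp 2 e_def by (auto simp: val_ring_def mpow_def)
    have "rs b = res v (pi powi (- e)) \<oplus>\<^bsub>resfield v\<^esub> res v (- up a)"
      unfolding rs_def ub using res_add[of "pi powi (- e)" "- up a"] pv(1) vr_neg[OF up_vr[OF a]] by simp
    also have "res v (pi powi (- e)) = \<zero>\<^bsub>resfield v\<^esub>" using res_zero_iff pv by simp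
    also have "res v (- up a) = \<ominus>\<^bsub>resfield v\<^esub> rs a" unfolding rs_def using res_neg up_vr[OF a] by simp
    finally have "rs b = \<ominus>\<^bsub>resfield v\<^esub> rs a"
      using rs_nz[OF a] by simp
    then show ?thesis using 2 vb e_def by simp
  qed
qed

lemma symb_rs_stein:
  assumes a: "a \<noteq> 0" and b: "b \<noteq> 0" and s: "a + b = 1"
    and g: "P @ [rs a, rs b] @ Q \<in> KM_gens (resfield v) n"
  shows "symb (resfield v) (P @ [rs a, rs b] @ Q) = \<one>\<^bsub>KM (resfield v) n\<^esub>"
  using stein_cases[OF a b s]
proof (elim disjE conjE)
  assume "rs b = \<one>\<^bsub>resfield v\<^esub>"
  then show ?thesis using k.symb_one_entry[of "P @ [rs a]" "rs b" Q n] g by simp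
next
  assume "rs a = \<one>\<^bsub>resfield v\<^esub>"
  then show ?thesis using k.symb_one_entry[of P "rs a" "rs b # Q" n] g by simp
next
  assume "rs a \<oplus>\<^bsub>resfield v\<^esub> rs b = \<one>\<^bsub>resfield v\<^esub>"
  then show ?thesis using k.symb_steinberg[OF g] by simp
next
  assume "rs b = \<ominus>\<^bsub>resfield v\<^esub> rs a"
  then show ?thesis using k.symb_neg_pair2[OF g] by simp
qed

abbreviation kk where "kk \<equiv> resfield v"
abbreviation MM where "MM \<equiv> \<ominus>\<^bsub>resfield v\<^esub> \<one>\<^bsub>resfield v\<^esub>"

lemma MM: "MM \<in> carrier kk" "MM \<noteq> \<zero>\<^bsub>kk\<^esub>"
  using k.neg_nz[of "\<one>\<^bsub>kk\<^esub>"] by auto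

lemma gensF: "xs \<in> KM_gens (fieldR :: 'a ring) n \<longleftrightarrow> length xs = n \<and> (\<forall>x\<in>set xs. x \<noteq> 0)"
  by (auto simp: KM_gens_iff)

lemma map_rs_gens: "\<forall>x\<in>set xs. x \<noteq> 0 \<Longrightarrow> map rs xs \<in> KM_gens kk (length xs)"
  using rs_nz by (auto simp: KM_gens_iff)

fun Dt :: "'a list \<Rightarrow> ('a set list \<Rightarrow>\<^sub>0 int) set" where
  "Dt [] = \<one>\<^bsub>KM kk 0\<^esub>"
| "Dt [x] = symb kk [] [^]\<^bsub>KM kk 0\<^esub> v x"
| "Dt (x # y # zs) =
     (symb kk (map rs (y # zs)) [^]\<^bsub>KM kk (Suc (length zs))\<^esub> v x)
     \<otimes>\<^bsub>KM kk (Suc (length zs))\<^esub> (lmul kk (length zs) MM (Dt (y # zs)) [^]\<^bsub>KM kk (Suc (length zs))\<^esub> v x)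
     \<otimes>\<^bsub>KM kk (Suc (length zs))\<^esub> inv\<^bsub>KM kk (Suc (length zs))\<^esub> (lmul kk (length zs) (rs x) (Dt (y # zs)))"

lemma Dt_cons:
  assumes "L \<noteq> []"
  shows "Dt (x # L) =
     (symb kk (map rs L) [^]\<^bsub>KM kk (length L)\<^esub> v x)
     \<otimes>\<^bsub>KM kk (length L)\<^esub> (lmul kk (length L - 1) MM (Dt L) [^]\<^bsub>KM kk (length L)\<^esub> v x)
     \<otimes>\<^bsub>KM kk (length L)\<^esub> inv\<^bsub>KM kk (length L)\<^esub> (lmul kk (length L - 1) (rs x) (Dt L))"
  using assms by (cases L) auto

lemma symb_nil_carrier: "symb kk [] \<in> carrier (KM kk 0)"
  by (rule symb_carrier) (simp add: KM_gens_iff)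

lemma Dt_carrier: "\<forall>x\<in>set xs. x \<noteq> 0 \<Longrightarrow> xs \<noteq> [] \<Longrightarrow> Dt xs \<in> carrier (KM kk (length xs - 1))"
proof (induction xs rule: Dt.induct)
  case 1 then show ?case by simp
next
  case (2 x)
  then show ?case using group.int_pow_closed[OF KM_group symb_nil_carrier] by simp
next
  case (3 x y zs)
  interpret G: comm_group "KM kk (Suc (length zs))" by (rule KM_comm)
  have T: "Dt (y # zs) \<in> carrier (KM kk (length zs))" using 3 by simp
  have S: "symb kk (map rs (y # zs)) \<in> carrier (KM kk (Suc (length zs)))"
    using symb_carrier[OF map_rs_gens[of "y # zs"]] 3 by simp
  have L1: "lmul kk (length zs) MM (Dt (y # zs)) \<in> carrier (KM kk (Suc (length zs)))"
    using k.lmul_closed[OF MM T] .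
  have L2: "lmul kk (length zs) (rs x) (Dt (y # zs)) \<in> carrier (KM kk (Suc (length zs)))"
    using k.lmul_closed[OF _ _ T] rs_nz 3 by simp
  show ?case using S L1 L2 by simp
qed

end




context dvr
begin

lemma Dt_mult:
  assumes xs: "\<forall>x\<in>set xs. x \<noteq> 0" and ys: "\<forall>y\<in>set ys. y \<noteq> 0" and a: "a \<noteq> 0" and b: "b \<noteq> 0"
  shows "Dt (xs @ [a * b] @ ys) = Dt (xs @ [a] @ ys) \<otimes>\<^bsub>KM kk (length xs + length ys)\<^esub> Dt (xs @ [b] @ ys)"
  using xs
proof (induction xs)
  case Nil
  show ?case
  proof (cases ys)
    case Nil
    interpret G: comm_group "KM kk 0" by (rule KM_comm)
    show ?thesis using Nil symb_nil_carrier a b by (simp add: v_mult G.int_pow_mult)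
  next
    case (Cons y zs)
    interpret G: comm_group "KM kk (Suc (length zs))" by (rule KM_comm)
    have yzs: "\<forall>x\<in>set (y # zs). x \<noteq> 0" using ys Cons by simp
    have T: "Dt (y # zs) \<in> carrier (KM kk (length zs))" using Dt_carrier[OF yzs] by simp
    have S: "symb kk (map rs (y # zs)) \<in> carrier (KM kk (Suc (length zs)))"
      using symb_carrier[OF map_rs_gens[OF yzs]] by simp
    have Lm: "lmul kk (length zs) MM (Dt (y # zs)) \<in> carrier (KM kk (Suc (length zs)))"
      using k.lmul_closed[OF MM T] .
    have La: "lmul kk (length zs) (rs a) (Dt (y # zs)) \<in> carrier (KM kk (Suc (length zs)))"
      using k.lmul_closed[OF _ _ T] rs_nz a by simp
    have Lb: "lmul kk (length zs) (rs b) (Dt (y # zs)) \<in> carrier (KM kk (Suc (length zs)))"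
      using k.lmul_closed[OF _ _ T] rs_nz b by simp
    have Lab: "lmul kk (length zs) (rs (a * b)) (Dt (y # zs)) = lmul kk (length zs) (rs a) (Dt (y # zs)) \<otimes>\<^bsub>KM kk (Suc (length zs))\<^esub> lmul kk (length zs) (rs b) (Dt (y # zs))"
      using rs_mult[OF a b] k.lmul_scalar_mult[OF _ _ _ _ T] rs_nz[OF a] rs_nz[OF b] by simp
    show ?thesis using Cons G.cg1[OF S Lm La Lb] Lab a b by (simp add: v_mult)
  qed
next
  case (Cons x xs')
  define La where "La = xs' @ [a] @ ys"
  define Lb where "Lb = xs' @ [b] @ ys"
  define Lab where "Lab = xs' @ [a * b] @ ys"
  have ne: "La \<noteq> []" "Lb \<noteq> []" "Lab \<noteq> []" unfolding La_def Lb_def Lab_def by simp_all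
  have len: "length La = Suc (length xs' + length ys)" "length Lb = Suc (length xs' + length ys)"
    "length Lab = Suc (length xs' + length ys)" unfolding La_def Lb_def Lab_def by simp_all
  let ?n = "length xs' + length ys"
  interpret G: comm_group "KM kk (Suc ?n)" by (rule KM_comm)
  have nz: "\<forall>x\<in>set La. x \<noteq> 0" "\<forall>x\<in>set Lb. x \<noteq> 0" "\<forall>x\<in>set Lab. x \<noteq> 0"
    using Cons.prems ys a b unfolding La_def Lb_def Lab_def by auto
  have x: "x \<noteq> 0" using Cons.prems by simp
  have IH: "Dt Lab = Dt La \<otimes>\<^bsub>KM kk ?n\<^esub> Dt Lb" using Cons.IH Cons.prems unfolding La_def Lb_def Lab_def by simp
  have TA: "Dt La \<in> carrier (KM kk ?n)" using Dt_carrier[OF nz(1) ne(1)] len by simp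
  have TB: "Dt Lb \<in> carrier (KM kk ?n)" using Dt_carrier[OF nz(2) ne(2)] len by simp
  have SA: "symb kk (map rs La) \<in> carrier (KM kk (Suc ?n))" using symb_carrier[OF map_rs_gens[OF nz(1)]] len by simp
  have SB: "symb kk (map rs Lb) \<in> carrier (KM kk (Suc ?n))" using symb_carrier[OF map_rs_gens[OF nz(2)]] len by simp
  have Sab: "symb kk (map rs Lab) = symb kk (map rs La) \<otimes>\<^bsub>KM kk (Suc ?n)\<^esub> symb kk (map rs Lb)"
  proof -
    have g: "map rs xs' @ [rs a] @ map rs ys \<in> KM_gens kk (Suc ?n)" using map_rs_gens[OF nz(1)] len unfolding La_def by simp
    show ?thesis using k.symb_mult[OF g, of "rs b"] rs_nz[OF b] rs_mult[OF a b] unfolding La_def Lb_def Lab_def by simp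
  qed
  have hM: "group_hom (KM kk ?n) (KM kk (Suc ?n)) (lmul kk ?n MM)" using k.lmul_gh[OF MM] .
  have hx: "group_hom (KM kk ?n) (KM kk (Suc ?n)) (lmul kk ?n (rs x))" using k.lmul_gh rs_nz[OF x] by simp
  have PM: "lmul kk ?n MM (Dt Lab) = lmul kk ?n MM (Dt La) \<otimes>\<^bsub>KM kk (Suc ?n)\<^esub> lmul kk ?n MM (Dt Lb)"
    using IH group_hom.hom_mult[OF hM TA TB] by simp
  have Px: "lmul kk ?n (rs x) (Dt Lab) = lmul kk ?n (rs x) (Dt La) \<otimes>\<^bsub>KM kk (Suc ?n)\<^esub> lmul kk ?n (rs x) (Dt Lb)"
    using IH group_hom.hom_mult[OF hx TA TB] by simp
  have c: "lmul kk ?n MM (Dt La) \<in> carrier (KM kk (Suc ?n))" "lmul kk ?n MM (Dt Lb) \<in> carrier (KM kk (Suc ?n))"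
    "lmul kk ?n (rs x) (Dt La) \<in> carrier (KM kk (Suc ?n))" "lmul kk ?n (rs x) (Dt Lb) \<in> carrier (KM kk (Suc ?n))"
    using group_hom.hom_closed[OF hM TA] group_hom.hom_closed[OF hM TB]
      group_hom.hom_closed[OF hx TA] group_hom.hom_closed[OF hx TB] by simp_all
  have "Dt (x # Lab) = Dt (x # La) \<otimes>\<^bsub>KM kk (Suc ?n)\<^esub> Dt (x # Lb)"
    unfolding Dt_cons[OF ne(1)] Dt_cons[OF ne(2)] Dt_cons[OF ne(3)] len
    using G.cg2[OF SA SB c] Sab PM Px by simp
  then show ?case unfolding La_def Lb_def Lab_def by simp
qed

lemma rb_eq: "ra \<in> carrier kk \<Longrightarrow> \<ominus>\<^bsub>kk\<^esub> ra = MM \<otimes>\<^bsub>kk\<^esub> ra"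
  by (simp add: k.l_minus)

lemma Dt_stein_nil_nil:
  assumes a: "a \<noteq> 0" and b: "b \<noteq> 0" and s: "a + b = 1"
  shows "Dt [a, b] = \<one>\<^bsub>KM kk 1\<^esub>"
proof -
  interpret G: comm_group "KM kk 1" by (rule KM_comm)
  interpret G1: comm_group "KM kk (Suc 0)" by (rule KM_comm)
  interpret G0: comm_group "KM kk 0" by (rule KM_comm)
  have ra: "rs a \<in> carrier kk" "rs a \<noteq> \<zero>\<^bsub>kk\<^esub>" using rs_nz[OF a] by auto
  have rb: "rs b \<in> carrier kk" "rs b \<noteq> \<zero>\<^bsub>kk\<^esub>" using rs_nz[OF b] by auto
  have Dta: "Dt [a, b] = symb kk [rs b] [^]\<^bsub>KM kk 1\<^esub> v a \<otimes>\<^bsub>KM kk 1\<^esub>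
      (lmul kk 0 MM (symb kk [] [^]\<^bsub>KM kk 0\<^esub> v b) [^]\<^bsub>KM kk 1\<^esub> v a) \<otimes>\<^bsub>KM kk 1\<^esub>
      inv\<^bsub>KM kk 1\<^esub> lmul kk 0 (rs a) (symb kk [] [^]\<^bsub>KM kk 0\<^esub> v b)"
    by simp
  have nilg: "[] \<in> KM_gens kk 0" by (simp add: KM_gens_iff)
  have hM: "group_hom (KM kk 0) (KM kk 1) (lmul kk 0 MM)" using k.lmul_gh[OF MM] by simp
  have ha: "group_hom (KM kk 0) (KM kk 1) (lmul kk 0 (rs a))" using k.lmul_gh[OF ra] by simp
  have LM: "lmul kk 0 MM (symb kk [] [^]\<^bsub>KM kk 0\<^esub> v b) = symb kk [MM] [^]\<^bsub>KM kk 1\<^esub> v b"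
    using group_hom.hom_int_pow[OF hM symb_nil_carrier] k.lmul_symb[OF MM nilg] by simp
  have La: "lmul kk 0 (rs a) (symb kk [] [^]\<^bsub>KM kk 0\<^esub> v b) = symb kk [rs a] [^]\<^bsub>KM kk 1\<^esub> v b"
    using group_hom.hom_int_pow[OF ha symb_nil_carrier] k.lmul_symb[OF ra nilg] by simp
  have gM: "[MM] \<in> KM_gens kk 1" and ga: "[rs a] \<in> KM_gens kk 1" and gb: "[rs b] \<in> KM_gens kk 1"
    using MM ra rb by (auto simp: KM_gens_iff)
  have sM: "symb kk [MM] \<in> carrier (KM kk 1)" and sa: "symb kk [rs a] \<in> carrier (KM kk 1)"
    and sb: "symb kk [rs b] \<in> carrier (KM kk 1)"
    using symb_carrier[OF gM] symb_carrier[OF ga] symb_carrier[OF gb] by auto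
  show ?thesis
    using stein_cases[OF a b s]
  proof (elim disjE conjE)
    assume "v b = 0" "rs b = \<one>\<^bsub>kk\<^esub>"
    moreover have "symb kk ([] @ [\<one>\<^bsub>kk\<^esub>] @ []) = \<one>\<^bsub>KM kk 1\<^esub>"
      using k.symb_one_entry[of "[]" "\<one>\<^bsub>kk\<^esub>" "[]" 1] by (simp add: KM_gens_iff)
    ultimately show ?thesis using Dta LM La sM sa by simp
  next
    assume "v a = 0" "rs a = \<one>\<^bsub>kk\<^esub>"
    moreover have "lmul kk 0 \<one>\<^bsub>kk\<^esub> (symb kk [] [^]\<^bsub>KM kk 0\<^esub> v b) = \<one>\<^bsub>KM kk 1\<^esub>"
      using k.lmul_one[of "symb kk [] [^]\<^bsub>KM kk 0\<^esub> v b" 0] symb_nil_carrier by simp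
    ultimately show ?thesis using Dta LM sM by simp
  next
    assume "v a = 0" "v b = 0"
    then show ?thesis using Dta LM La sM sa by simp
  next
    assume vb: "v b = v a" and rbe: "rs b = \<ominus>\<^bsub>kk\<^esub> rs a"
    have "symb kk [rs b] = symb kk [MM] \<otimes>\<^bsub>KM kk 1\<^esub> symb kk [rs a]"
      using rbe rb_eq[OF ra(1)] k.symb_mult[of "[]" MM "[]" 1 "rs a"] gM ra by simp
    moreover have "symb kk [MM] \<otimes>\<^bsub>KM kk 1\<^esub> symb kk [MM] = \<one>\<^bsub>KM kk 1\<^esub>"
      using k.symb_m1_sq[of "[]" MM "[]" 1] gM by simp
    moreover note G.cg_hard[OF sM sa G.one_closed G.one_closed G.one_closed, of "v a"]
    ultimately show ?thesis using Dta LM La vb sM sa by (simp add: G.int_pow_pow)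
  qed
qed

lemma Dt_stein_nil_cons:
  assumes a: "a \<noteq> 0" and b: "b \<noteq> 0" and s: "a + b = 1" and ys: "\<forall>y\<in>set (z # zs). y \<noteq> 0"
  shows "Dt (a # b # z # zs) = \<one>\<^bsub>KM kk (Suc (Suc (length zs)))\<^esub>"
proof -
  let ?m = "length zs"
  let ?G1 = "KM kk (Suc ?m)" and ?G2 = "KM kk (Suc (Suc ?m))"
  interpret G1: comm_group ?G1 by (rule KM_comm)
  interpret G2: comm_group ?G2 by (rule KM_comm)
  have ra: "rs a \<in> carrier kk" "rs a \<noteq> \<zero>\<^bsub>kk\<^esub>" using rs_nz[OF a] by auto
  have rb: "rs b \<in> carrier kk" "rs b \<noteq> \<zero>\<^bsub>kk\<^esub>" using rs_nz[OF b] by auto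
  define E where "E = Dt (z # zs)"
  define S where "S = symb kk (map rs (z # zs))"
  define B where "B = Dt (b # z # zs)"
  have E: "E \<in> carrier (KM kk ?m)" unfolding E_def using Dt_carrier[OF ys] by simp
  have gS: "map rs (z # zs) \<in> KM_gens kk (Suc ?m)" using map_rs_gens[OF ys] by simp
  have S: "S \<in> carrier ?G1" unfolding S_def using symb_carrier[OF gS] .
  have hM1: "group_hom (KM kk ?m) ?G1 (lmul kk ?m MM)" using k.lmul_gh[OF MM] .
  have ha1: "group_hom (KM kk ?m) ?G1 (lmul kk ?m (rs a))" using k.lmul_gh[OF ra] .
  have hb1: "group_hom (KM kk ?m) ?G1 (lmul kk ?m (rs b))" using k.lmul_gh[OF rb] .
  have hM2: "group_hom ?G1 ?G2 (lmul kk (Suc ?m) MM)" using k.lmul_gh[OF MM] .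
  have ha2: "group_hom ?G1 ?G2 (lmul kk (Suc ?m) (rs a))" using k.lmul_gh[OF ra] .
  have LME: "lmul kk ?m MM E \<in> carrier ?G1" using group_hom.hom_closed[OF hM1 E] .
  have LaE: "lmul kk ?m (rs a) E \<in> carrier ?G1" using group_hom.hom_closed[OF ha1 E] .
  have LbE: "lmul kk ?m (rs b) E \<in> carrier ?G1" using group_hom.hom_closed[OF hb1 E] .
  have Bdef: "B = S [^]\<^bsub>?G1\<^esub> v b \<otimes>\<^bsub>?G1\<^esub> (lmul kk ?m MM E [^]\<^bsub>?G1\<^esub> v b) \<otimes>\<^bsub>?G1\<^esub> inv\<^bsub>?G1\<^esub> lmul kk ?m (rs b) E"
    unfolding B_def S_def E_def by simp
  have Bc: "B \<in> carrier ?G1" using Bdef S LME LbE by simp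
  have gbS: "rs b # map rs (z # zs) \<in> KM_gens kk (Suc (Suc ?m))" using gS rb by (auto simp: KM_gens_iff)
  have Adef: "Dt (a # b # z # zs) = symb kk (rs b # map rs (z # zs)) [^]\<^bsub>?G2\<^esub> v a \<otimes>\<^bsub>?G2\<^esub>
      (lmul kk (Suc ?m) MM B [^]\<^bsub>?G2\<^esub> v a) \<otimes>\<^bsub>?G2\<^esub> inv\<^bsub>?G2\<^esub> lmul kk (Suc ?m) (rs a) B"
    unfolding B_def by simp
  show ?thesis
    using stein_cases[OF a b s]
  proof (elim disjE conjE)
    assume vb: "v b = 0" and rb1: "rs b = \<one>\<^bsub>kk\<^esub>"
    have "lmul kk ?m (rs b) E = \<one>\<^bsub>?G1\<^esub>" using rb1 k.lmul_one[OF E] by simp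
    then have B1: "B = \<one>\<^bsub>?G1\<^esub>" using Bdef vb by simp
    have "symb kk ([] @ [rs b] @ map rs (z # zs)) = \<one>\<^bsub>?G2\<^esub>"
      using k.symb_one_entry[of "[]" "rs b" "map rs (z # zs)" "Suc (Suc ?m)"] gbS rb1 by simp
    then show ?thesis using Adef B1 group_hom.hom_one[OF hM2] group_hom.hom_one[OF ha2] by simp
  next
    assume va: "v a = 0" and ra1: "rs a = \<one>\<^bsub>kk\<^esub>"
    have "lmul kk (Suc ?m) (rs a) B = \<one>\<^bsub>?G2\<^esub>" using ra1 k.lmul_one[OF Bc] by simp
    then show ?thesis using Adef va by simp
  next
    assume va: "v a = 0" and vb: "v b = 0" and sum: "rs a \<oplus>\<^bsub>kk\<^esub> rs b = \<one>\<^bsub>kk\<^esub>"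
    have B1: "B = inv\<^bsub>?G1\<^esub> lmul kk ?m (rs b) E" using Bdef vb LbE by simp
    have "lmul kk (Suc ?m) (rs a) B = inv\<^bsub>?G2\<^esub> lmul kk (Suc ?m) (rs a) (lmul kk ?m (rs b) E)"
      using B1 group_hom.hom_inv[OF ha2 LbE] by simp
    also have "lmul kk (Suc ?m) (rs a) (lmul kk ?m (rs b) E) = \<one>\<^bsub>?G2\<^esub>"
      using k.lmul_steinberg[OF ra rb sum E] .
    finally show ?thesis using Adef va by simp
  next
    assume vb: "v b = v a" and rbe: "rs b = \<ominus>\<^bsub>kk\<^esub> rs a"
    define p where "p = lmul kk (Suc ?m) MM S"
    define q where "q = lmul kk (Suc ?m) (rs a) S"
    define r where "r = lmul kk (Suc ?m) MM (lmul kk ?m MM E)"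
    define s' where "s' = lmul kk (Suc ?m) MM (lmul kk ?m (rs a) E)"
    define t where "t = lmul kk (Suc ?m) (rs a) (lmul kk ?m MM E)"
    have pc: "p \<in> carrier ?G2" "q \<in> carrier ?G2" "r \<in> carrier ?G2" "s' \<in> carrier ?G2" "t \<in> carrier ?G2"
      unfolding p_def q_def r_def s'_def t_def
      using group_hom.hom_closed[OF hM2] group_hom.hom_closed[OF ha2] S LME LaE by auto
    have pp: "p \<otimes>\<^bsub>?G2\<^esub> p = \<one>\<^bsub>?G2\<^esub>" unfolding p_def using k.lmul_m1_sq[OF S] .
    have rr: "r \<otimes>\<^bsub>?G2\<^esub> r = \<one>\<^bsub>?G2\<^esub>" unfolding r_def using k.lmul_m1_sq[OF LME] .
    have st: "s' \<otimes>\<^bsub>?G2\<^esub> t = \<one>\<^bsub>?G2\<^esub>" unfolding s'_def t_def using k.lmul_anti[OF MM ra E] .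
    have rbm: "rs b = MM \<otimes>\<^bsub>kk\<^esub> rs a" using rbe rb_eq[OF ra(1)] by simp
    have Lrb: "lmul kk ?m (rs b) E = lmul kk ?m MM E \<otimes>\<^bsub>?G1\<^esub> lmul kk ?m (rs a) E"
      using rbm k.lmul_scalar_mult[OF MM ra E] by simp
    have sym1: "symb kk (rs b # map rs (z # zs)) = p \<otimes>\<^bsub>?G2\<^esub> q"
    proof -
      have "symb kk (rs b # map rs (z # zs)) = lmul kk (Suc ?m) (rs b) S"
        unfolding S_def using k.lmul_symb[OF rb gS] by simp
      also have "\<dots> = p \<otimes>\<^bsub>?G2\<^esub> q" unfolding p_def q_def using rbm k.lmul_scalar_mult[OF MM ra S] by simp
      finally show ?thesis .
    qed
    have LMB: "lmul kk (Suc ?m) MM B = p [^]\<^bsub>?G2\<^esub> v a \<otimes>\<^bsub>?G2\<^esub> r [^]\<^bsub>?G2\<^esub> v a \<otimes>\<^bsub>?G2\<^esub> inv\<^bsub>?G2\<^esub> (r \<otimes>\<^bsub>?G2\<^esub> s')"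
    proof -
      have "lmul kk (Suc ?m) MM B = lmul kk (Suc ?m) MM (S [^]\<^bsub>?G1\<^esub> v b) \<otimes>\<^bsub>?G2\<^esub> lmul kk (Suc ?m) MM (lmul kk ?m MM E [^]\<^bsub>?G1\<^esub> v b) \<otimes>\<^bsub>?G2\<^esub> lmul kk (Suc ?m) MM (inv\<^bsub>?G1\<^esub> lmul kk ?m (rs b) E)"
        unfolding Bdef using S LME LbE by (simp add: group_hom.hom_mult[OF hM2])
      also have "\<dots> = p [^]\<^bsub>?G2\<^esub> v a \<otimes>\<^bsub>?G2\<^esub> r [^]\<^bsub>?G2\<^esub> v a \<otimes>\<^bsub>?G2\<^esub> inv\<^bsub>?G2\<^esub> (r \<otimes>\<^bsub>?G2\<^esub> s')"
        unfolding p_def r_def s'_def using vb S LME LaE LbE Lrb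
        by (simp add: group_hom.hom_int_pow[OF hM2] group_hom.hom_inv[OF hM2] group_hom.hom_mult[OF hM2])
      finally show ?thesis .
    qed
    have LaB: "lmul kk (Suc ?m) (rs a) B = q [^]\<^bsub>?G2\<^esub> v a \<otimes>\<^bsub>?G2\<^esub> t [^]\<^bsub>?G2\<^esub> v a \<otimes>\<^bsub>?G2\<^esub> inv\<^bsub>?G2\<^esub> \<one>\<^bsub>?G2\<^esub>"
    proof -
      have z: "lmul kk (Suc ?m) (rs a) (lmul kk ?m (rs b) E) = \<one>\<^bsub>?G2\<^esub>"
        using rbe k.lmul_neg[OF ra E] by simp
      have "lmul kk (Suc ?m) (rs a) B = lmul kk (Suc ?m) (rs a) (S [^]\<^bsub>?G1\<^esub> v b) \<otimes>\<^bsub>?G2\<^esub> lmul kk (Suc ?m) (rs a) (lmul kk ?m MM E [^]\<^bsub>?G1\<^esub> v b) \<otimes>\<^bsub>?G2\<^esub> lmul kk (Suc ?m) (rs a) (inv\<^bsub>?G1\<^esub> lmul kk ?m (rs b) E)"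
        unfolding Bdef using S LME LbE by (simp add: group_hom.hom_mult[OF ha2])
      also have "\<dots> = q [^]\<^bsub>?G2\<^esub> v a \<otimes>\<^bsub>?G2\<^esub> t [^]\<^bsub>?G2\<^esub> v a \<otimes>\<^bsub>?G2\<^esub> inv\<^bsub>?G2\<^esub> \<one>\<^bsub>?G2\<^esub>"
        unfolding q_def t_def using vb S LME LbE z
        by (simp add: group_hom.hom_int_pow[OF ha2] group_hom.hom_inv[OF ha2])
      finally show ?thesis .
    qed
    show ?thesis unfolding Adef sym1 LMB LaB using G2.cg_hard[OF pc pp rr st] .
  qed
qed

lemma Dt_stein:
  assumes xs: "\<forall>x\<in>set xs. x \<noteq> 0" and ys: "\<forall>y\<in>set ys. y \<noteq> 0" and a: "a \<noteq> 0" and b: "b \<noteq> 0"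
    and s: "a + b = 1"
  shows "Dt (xs @ [a, b] @ ys) = \<one>\<^bsub>KM kk (Suc (length xs + length ys))\<^esub>"
  using xs
proof (induction xs)
  case Nil
  show ?case
  proof (cases ys)
    case Nil then show ?thesis using Dt_stein_nil_nil[OF a b s] by simp
  next
    case (Cons z zs) then show ?thesis using Dt_stein_nil_cons[OF a b s, of z zs] ys by simp
  qed
next
  case (Cons x xs')
  define L where "L = xs' @ [a, b] @ ys"
  have ne: "L \<noteq> []" unfolding L_def by simp
  let ?n = "Suc (length xs' + length ys)"
  have len: "length L = Suc ?n" unfolding L_def by simp
  interpret G: comm_group "KM kk (Suc ?n)" by (rule KM_comm)
  have nz: "\<forall>x\<in>set L. x \<noteq> 0" using Cons.prems ys a b unfolding L_def by auto
  have x: "x \<noteq> 0" using Cons.prems by simp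
  have IH: "Dt L = \<one>\<^bsub>KM kk ?n\<^esub>" using Cons.IH Cons.prems unfolding L_def by simp
  have SL: "symb kk (map rs L) = \<one>\<^bsub>KM kk (Suc ?n)\<^esub>"
  proof -
    have g: "map rs xs' @ [rs a, rs b] @ map rs ys \<in> KM_gens kk (Suc ?n)" using map_rs_gens[OF nz] len unfolding L_def by simp
    show ?thesis using symb_rs_stein[OF a b s g] unfolding L_def by simp
  qed
  have hM: "group_hom (KM kk ?n) (KM kk (Suc ?n)) (lmul kk ?n MM)" using k.lmul_gh[OF MM] .
  have hx: "group_hom (KM kk ?n) (KM kk (Suc ?n)) (lmul kk ?n (rs x))" using k.lmul_gh rs_nz[OF x] by simp
  have "Dt (x # L) = \<one>\<^bsub>KM kk (Suc ?n)\<^esub>"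
    unfolding Dt_cons[OF ne] len using SL IH group_hom.hom_one[OF hM] group_hom.hom_one[OF hx] by simp
  then show ?case unfolding L_def by simp
qed

lemma Dt_units: "\<forall>x\<in>set xs. x \<noteq> 0 \<and> v x = 0 \<Longrightarrow> xs \<noteq> [] \<Longrightarrow> Dt xs = \<one>\<^bsub>KM kk (length xs - 1)\<^esub>"
proof (induction xs rule: Dt.induct)
  case 1 then show ?case by simp
next
  case (2 x)
  interpret G: comm_group "KM kk 0" by (rule KM_comm)
  show ?case using 2 by simp
next
  case (3 x y zs)
  interpret G: comm_group "KM kk (Suc (length zs))" by (rule KM_comm)
  have IH: "Dt (y # zs) = \<one>\<^bsub>KM kk (length zs)\<^esub>" using 3 by simp
  have hx: "group_hom (KM kk (length zs)) (KM kk (Suc (length zs))) (lmul kk (length zs) (rs x))"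
    using k.lmul_gh rs_nz 3 by simp
  have hM: "group_hom (KM kk (length zs)) (KM kk (Suc (length zs))) (lmul kk (length zs) MM)"
    using k.lmul_gh[OF MM] .
  show ?case using 3 IH group_hom.hom_one[OF hx] group_hom.hom_one[OF hM] by simp
qed

lemma tame_exists: "\<exists>d. tame_prop v n d"
proof -
  have "\<exists>h\<in>hom (KM fieldR (Suc n)) (KM kk n). \<forall>us\<in>KM_gens fieldR (Suc n). h (symb fieldR us) = Dt us"
  proof (rule KM_universal[OF KM_comm])
    fix us assume "us \<in> KM_gens (fieldR :: 'a ring) (Suc n)"
    then have "length us = Suc n" "\<forall>x\<in>set us. x \<noteq> 0" by (auto simp: gensF)
    then show "Dt us \<in> carrier (KM kk n)" using Dt_carrier[of us] by (cases us) auto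
  next
    fix xs a b ys
    assume g: "xs @ [a] @ ys \<in> KM_gens (fieldR :: 'a ring) (Suc n)" "xs @ [b] @ ys \<in> KM_gens (fieldR :: 'a ring) (Suc n)"
      "xs @ [a \<otimes>\<^bsub>fieldR\<^esub> b] @ ys \<in> KM_gens (fieldR :: 'a ring) (Suc n)"
    then have "length xs + length ys = n" by (simp add: gensF)
    then show "Dt (xs @ [a \<otimes>\<^bsub>fieldR\<^esub> b] @ ys) = Dt (xs @ [a] @ ys) \<otimes>\<^bsub>KM kk n\<^esub> Dt (xs @ [b] @ ys)"
      using Dt_mult[of xs ys a b] g by (simp add: gensF)
  next
    fix xs a b ys
    assume g: "xs @ [a, b] @ ys \<in> KM_gens (fieldR :: 'a ring) (Suc n)" and s: "a \<oplus>\<^bsub>fieldR\<^esub> b = \<one>\<^bsub>fieldR\<^esub>"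
    then have "Suc (length xs + length ys) = n" by (simp add: gensF)
    then show "Dt (xs @ [a, b] @ ys) = \<one>\<^bsub>KM kk n\<^esub>"
      using Dt_stein[of xs ys a b] g s by (simp add: gensF)
  qed
  then obtain h where h: "h \<in> hom (KM fieldR (Suc n)) (KM kk n)" "\<forall>us\<in>KM_gens fieldR (Suc n). h (symb fieldR us) = Dt us"
    by blast
  have "tame_prop v n h"
    unfolding tame_prop_def
  proof (intro conjI allI impI)
    show "h \<in> hom (KM fieldR (Suc n)) (KM (resfield v) n)" using h(1) .
  next
    fix p us
    assume A: "p \<noteq> 0 \<and> v p = 1 \<and> length us = n \<and> (\<forall>u\<in>set us. u \<noteq> 0 \<and> v u = 0)"
    have g: "p # us \<in> KM_gens fieldR (Suc n)" using A by (auto simp: gensF)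
    have mr: "map rs us = map (res v) us" using A rs_unit by auto
    show "h (symb fieldR (p # us)) = symb (resfield v) (map (res v) us)"
    proof (cases us)
      case Nil
      interpret G: comm_group "KM kk 0" by (rule KM_comm)
      show ?thesis using h(2) g Nil A symb_nil_carrier by simp
    next
      case (Cons y zs)
      interpret G: comm_group "KM kk (Suc (length zs))" by (rule KM_comm)
      have U: "Dt (y # zs) = \<one>\<^bsub>KM kk (length zs)\<^esub>" using Dt_units[of "y # zs"] A Cons by simp
      have hx: "group_hom (KM kk (length zs)) (KM kk (Suc (length zs))) (lmul kk (length zs) (rs p))"
        using k.lmul_gh rs_nz A by simp
      have hM: "group_hom (KM kk (length zs)) (KM kk (Suc (length zs))) (lmul kk (length zs) MM)"
        using k.lmul_gh[OF MM] .
      have gs: "map rs (y # zs) \<in> KM_gens kk (Suc (length zs))" using map_rs_gens[of "y # zs"] A Cons by simp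
      have "Dt (p # y # zs) = symb kk (map rs (y # zs))"
        using A U group_hom.hom_one[OF hx] group_hom.hom_one[OF hM] symb_carrier[OF gs]
        by (simp only: Dt.simps G.int_pow_one G.int_pow_1 G.r_one G.inv_one G.one_closed)
      have "h (symb fieldR (p # us)) = Dt (p # us)" using h(2) g by blast
      also have "\<dots> = symb kk (map rs us)" using Cons \<open>Dt (p # y # zs) = _\<close> by simp
      also have "\<dots> = symb kk (map (res v) us)" by (simp only: mr)
      finally show ?thesis .
    qed
  next
    fix us
    assume A: "length us = Suc n \<and> (\<forall>u\<in>set us. u \<noteq> 0 \<and> v u = 0)"
    have g: "us \<in> KM_gens fieldR (Suc n)" using A by (auto simp: gensF)
    have ne: "us \<noteq> []" using A by auto
    have "h (symb fieldR us) = Dt us" using h(2) g by blast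
    also have "\<dots> = \<one>\<^bsub>KM (resfield v) (length us - 1)\<^esub>" using Dt_units[OF _ ne] A by blast
    finally show "h (symb fieldR us) = \<one>\<^bsub>KM (resfield v) n\<^esub>" using A by simp
  qed
  then show ?thesis by blast
qed

lemma tame_prop_tame: "tame_prop v n (tame v n)"
  unfolding tame_def using someI_ex[OF tame_exists] .

end




section \<open>Symbols over F\<close>

declare ball_Un [simp]

abbreviation FR :: "'a::field ring" where "FR \<equiv> fieldR"

lemma gF: "xs \<in> KM_gens (FR :: 'a::field ring) n \<longleftrightarrow> length xs = n \<and> (\<forall>x\<in>set xs. x \<noteq> 0)"
  by (auto simp: KM_gens_iff)

lemma F_inv: "(x::'a::field) \<noteq> 0 \<Longrightarrow> inv\<^bsub>FR\<^esub> x = inverse x"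
  using monoid.inv_char[OF ring.is_monoid[OF field.is_ring[OF field_fieldR]], of x "inverse x"] by simp

lemma FS_mult:
  assumes "\<forall>x\<in>set xs. (x::'a::field) \<noteq> 0" "\<forall>y\<in>set ys. y \<noteq> 0" "a \<noteq> 0" "b \<noteq> 0"
  shows "symb FR (xs @ [a * b] @ ys) = symb FR (xs @ [a] @ ys) \<otimes>\<^bsub>KM FR (Suc (length xs + length ys))\<^esub> symb FR (xs @ [b] @ ys)"
  using field.symb_mult[OF field_fieldR, of xs a ys "Suc (length xs + length ys)" b] assms by (simp add: gF ball_Un)

lemma FS_inv:
  assumes "\<forall>x\<in>set xs. (x::'a::field) \<noteq> 0" "\<forall>y\<in>set ys. y \<noteq> 0" "a \<noteq> 0"
  shows "symb FR (xs @ [inverse a] @ ys) = inv\<^bsub>KM FR (Suc (length xs + length ys))\<^esub> symb FR (xs @ [a] @ ys)"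
  using field.symb_inv_entry[OF field_fieldR, of xs a ys "Suc (length xs + length ys)"] assms F_inv[OF assms(3)]
  by (simp add: gF ball_Un)

lemma FS_carrier:
  assumes "\<forall>x\<in>set xs. (x::'a::field) \<noteq> 0" "length xs = N"
  shows "symb FR xs \<in> carrier (KM FR N)"
  using symb_carrier[of xs FR N] assms by (simp add: gF)

lemma FS_power:
  assumes "\<forall>x\<in>set xs. (x::'a::field) \<noteq> 0" "\<forall>y\<in>set ys. y \<noteq> 0" "a \<noteq> 0"
  shows "symb FR (xs @ [a ^ k] @ ys) = symb FR (xs @ [a] @ ys) [^]\<^bsub>KM FR (Suc (length xs + length ys))\<^esub> k"
proof (induction k)
  case 0
  show ?case using field.symb_one_entry[OF field_fieldR, of xs a ys "Suc (length xs + length ys)"] assms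
    by (simp add: gF ball_Un)
next
  case (Suc k)
  interpret G: comm_group "KM FR (Suc (length xs + length ys))" by (rule KM_comm)
  have c: "symb FR (xs @ [a] @ ys) \<in> carrier (KM FR (Suc (length xs + length ys)))"
    using FS_carrier[of "xs @ [a] @ ys" "Suc (length xs + length ys)"] assms by (simp add: ball_Un)
  have "symb FR (xs @ [a ^ Suc k] @ ys) = symb FR (xs @ [a] @ ys) \<otimes>\<^bsub>KM FR (Suc (length xs + length ys))\<^esub> symb FR (xs @ [a ^ k] @ ys)"
    using FS_mult[OF assms(1,2,3), of "a ^ k"] assms(3) by simp
  then show ?case using Suc c G.m_comm[OF c G.nat_pow_closed[OF c, of k]] by simp
qed

lemma FS_powi:
  assumes "\<forall>x\<in>set xs. (x::'a::field) \<noteq> 0" "\<forall>y\<in>set ys. y \<noteq> 0" "a \<noteq> 0"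
  shows "symb FR (xs @ [a powi k] @ ys) = symb FR (xs @ [a] @ ys) [^]\<^bsub>KM FR (Suc (length xs + length ys))\<^esub> k"
proof -
  interpret G: comm_group "KM FR (Suc (length xs + length ys))" by (rule KM_comm)
  have c: "symb FR (xs @ [a] @ ys) \<in> carrier (KM FR (Suc (length xs + length ys)))"
    using FS_carrier[of "xs @ [a] @ ys" "Suc (length xs + length ys)"] assms by (simp add: ball_Un)
  show ?thesis
  proof (cases "k \<ge> 0")
    case True
    then obtain n where n: "k = int n" using nonneg_eq_int by blast
    have "a powi k = a ^ n" unfolding n by (rule power_int_of_nat)
    then show ?thesis using FS_power[OF assms, of n] n int_pow_int by metis
  next
    case False
    then obtain n where n: "k = - int n" by (metis minus_minus neg_0_le_iff_le nonneg_eq_int nle_le)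
    have "a powi k = inverse (a ^ n)" unfolding n by (simp add: power_int_minus)
    then have "symb FR (xs @ [a powi k] @ ys) = inv\<^bsub>KM FR (Suc (length xs + length ys))\<^esub> (symb FR (xs @ [a] @ ys) [^]\<^bsub>KM FR (Suc (length xs + length ys))\<^esub> n)"
      using FS_inv[OF assms(1,2), of "a ^ n"] FS_power[OF assms, of n] assms(3) by simp
    then show ?thesis using n G.int_pow_neg_int[OF c] by simp
  qed
qed

lemma FS_stein:
  assumes "\<forall>x\<in>set xs. (x::'a::field) \<noteq> 0" "\<forall>y\<in>set ys. y \<noteq> 0" "a \<noteq> 0" "b \<noteq> 0" "a + b = 1"
  shows "symb FR (xs @ [a, b] @ ys) = \<one>\<^bsub>KM FR (Suc (Suc (length xs + length ys)))\<^esub>"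
  using field.symb_steinberg[OF field_fieldR, of xs a b ys "Suc (Suc (length xs + length ys))"] assms
  by (simp add: gF ball_Un)

lemma FS_swap:
  assumes "\<forall>x\<in>set xs. (x::'a::field) \<noteq> 0" "\<forall>y\<in>set ys. y \<noteq> 0" "a \<noteq> 0" "b \<noteq> 0"
  shows "symb FR (xs @ [a, b] @ ys) = inv\<^bsub>KM FR (Suc (Suc (length xs + length ys)))\<^esub> symb FR (xs @ [b, a] @ ys)"
proof -
  interpret G: comm_group "KM FR (Suc (Suc (length xs + length ys)))" by (rule KM_comm)
  have "symb FR (xs @ [a, b] @ ys) \<otimes>\<^bsub>KM FR (Suc (Suc (length xs + length ys)))\<^esub> symb FR (xs @ [b, a] @ ys) = \<one>\<^bsub>KM FR (Suc (Suc (length xs + length ys)))\<^esub>"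
    using field.symb_swap[OF field_fieldR, of xs a b ys "Suc (Suc (length xs + length ys))"] assms
    by (simp add: gF ball_Un)
  then show ?thesis using FS_carrier[of "xs @ [a, b] @ ys" "Suc (Suc (length xs + length ys))"] FS_carrier[of "xs @ [b, a] @ ys" "Suc (Suc (length xs + length ys))"] assms
    by (simp add: G.inv_equality ball_Un)
qed

lemma FS_aa:
  assumes "\<forall>x\<in>set xs. (x::'a::field) \<noteq> 0" "\<forall>y\<in>set ys. y \<noteq> 0" "a \<noteq> 0"
  shows "symb FR (xs @ [a, a] @ ys) = symb FR (xs @ [a, -1] @ ys)"
  using field.symb_aa[OF field_fieldR, of xs a a ys "Suc (Suc (length xs + length ys))"] assms
  by (simp add: gF ball_Un)

lemma subgroup_inv_iff:
  assumes "subgroup H G" "group G" "x \<in> carrier G"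
  shows "inv\<^bsub>G\<^esub> x \<in> H \<longleftrightarrow> x \<in> H"
  using assms by (metis group.inv_inv subgroup.m_inv_closed)

lemma move_left:
  assumes H: "subgroup H (KM FR N)"
    and nz: "\<forall>x\<in>set P. (x::'a::field) \<noteq> 0" "\<forall>x\<in>set rs. x \<noteq> 0" "\<forall>x\<in>set Q. x \<noteq> 0" "y \<noteq> 0"
    and len: "length P + length rs + length Q + 1 = N"
  shows "symb FR (P @ rs @ [y] @ Q) \<in> H \<longleftrightarrow> symb FR (P @ [y] @ rs @ Q) \<in> H"
  using nz(1,2) len
proof (induction rs arbitrary: P)
  case Nil then show ?case by simp
next
  case (Cons r rs')
  have IH: "symb FR ((P @ [r]) @ rs' @ [y] @ Q) \<in> H \<longleftrightarrow> symb FR ((P @ [r]) @ [y] @ rs' @ Q) \<in> H"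
    using Cons.IH[of "P @ [r]"] Cons.prems by simp
  have N: "Suc (Suc (length P + length (rs' @ Q))) = N" using Cons.prems by simp
  have nzP: "\<forall>x\<in>set P. x \<noteq> 0" using Cons.prems by simp
  have nzR: "\<forall>x\<in>set (rs' @ Q). x \<noteq> 0" using Cons.prems nz(3) by (simp add: ball_Un)
  have r: "r \<noteq> 0" using Cons.prems by simp
  have sw: "symb FR (P @ [r, y] @ (rs' @ Q)) = inv\<^bsub>KM FR N\<^esub> symb FR (P @ [y, r] @ (rs' @ Q))"
    using FS_swap[OF nzP nzR r nz(4)] unfolding N .
  have nzA: "\<forall>x\<in>set (P @ [y, r] @ (rs' @ Q)). x \<noteq> 0" using nzP nzR r nz(4) by simp
  have c: "symb FR (P @ [y, r] @ (rs' @ Q)) \<in> carrier (KM FR N)"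
    using FS_carrier[OF nzA] N by simp
  have "symb FR ((P @ [r]) @ [y] @ rs' @ Q) \<in> H \<longleftrightarrow> symb FR (P @ [y, r] @ (rs' @ Q)) \<in> H"
    using sw subgroup_inv_iff[OF H KM_group c] by simp
  then show ?case using IH by simp
qed

lemma subgroup_pow_mult:
  assumes "subgroup H G" "group G" "x \<in> H" "y \<in> H"
  shows "x [^]\<^bsub>G\<^esub> (k::int) \<otimes>\<^bsub>G\<^esub> y \<in> H"
  using assms by (simp add: group.subgroup_int_pow_closed subgroup.m_closed)

context dvr
begin

lemma decomp:
  assumes "\<forall>x\<in>set P. x \<noteq> 0" "\<forall>x\<in>set Q. x \<noteq> 0" "x \<noteq> 0"
  shows "symb FR (P @ [x] @ Q) = symb FR (P @ [pi] @ Q) [^]\<^bsub>KM FR (Suc (length P + length Q))\<^esub> v x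
     \<otimes>\<^bsub>KM FR (Suc (length P + length Q))\<^esub> symb FR (P @ [up x] @ Q)"
proof -
  have "symb FR (P @ [x] @ Q) = symb FR (P @ [pi powi v x * up x] @ Q)" using up_decomp[of x] by simp
  also have "\<dots> = symb FR (P @ [pi powi v x] @ Q) \<otimes>\<^bsub>KM FR (Suc (length P + length Q))\<^esub> symb FR (P @ [up x] @ Q)"
    using FS_mult[OF assms(1,2) pi_powi_nz up_nz[OF assms(3)]] by simp
  also have "symb FR (P @ [pi powi v x] @ Q) = symb FR (P @ [pi] @ Q) [^]\<^bsub>KM FR (Suc (length P + length Q))\<^esub> v x"
    using FS_powi[OF assms(1,2) pi(1)] by simp
  finally show ?thesis .
qed

lemma exp2:
  assumes H: "subgroup H (KM FR N)" and pz: "\<forall>x\<in>set pz. x \<noteq> 0"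
    and B: "\<And>ws. \<forall>w\<in>set ws. w \<noteq> 0 \<and> v w = 0 \<Longrightarrow> length pz + length ws + 1 = N \<Longrightarrow> symb FR (pz @ [pi] @ ws) \<in> H"
    and qs: "\<forall>w\<in>set qs. w \<noteq> 0 \<and> v w = 0"
  shows "\<forall>w\<in>set ts. w \<noteq> 0 \<and> v w = 0 \<Longrightarrow> \<forall>x\<in>set xs. x \<noteq> 0 \<Longrightarrow> length pz + length qs + length ts + length xs + 1 = N
     \<Longrightarrow> symb FR (pz @ qs @ [pi] @ ts @ xs) \<in> H"
proof (induction xs arbitrary: ts)
  case Nil
  have "symb FR (pz @ [pi] @ qs @ ts) \<in> H" using B[of "qs @ ts"] qs Nil by simp
  moreover have "symb FR (pz @ qs @ [pi] @ ts) \<in> H \<longleftrightarrow> symb FR (pz @ [pi] @ qs @ ts) \<in> H"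
    by (rule move_left[OF H]) (use pz qs Nil pi in simp_all)
  ultimately show ?case by simp
next
  case (Cons x xs)
  have x: "x \<noteq> 0" using Cons.prems by simp
  let ?P = "pz @ qs @ [pi] @ ts"
  have nzP: "\<forall>y\<in>set ?P. y \<noteq> 0" using pz qs Cons.prems pi by auto
  have nzx: "\<forall>y\<in>set xs. y \<noteq> 0" using Cons.prems by simp
  have N: "Suc (length ?P + length xs) = N" using Cons.prems by simp
  have d: "symb FR (?P @ [x] @ xs) = symb FR (?P @ [pi] @ xs) [^]\<^bsub>KM FR N\<^esub> v x \<otimes>\<^bsub>KM FR N\<^esub> symb FR (?P @ [up x] @ xs)"
    using decomp[OF nzP nzx x] N by simp
  have s2: "symb FR (?P @ [up x] @ xs) \<in> H"
    using Cons.IH[of "ts @ [up x]"] Cons.prems up_nz[OF x] v_up[OF x] by simp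
  have s1: "symb FR (?P @ [pi] @ xs) \<in> H"
  proof -
    have "symb FR ((pz @ qs) @ [pi, - 1] @ (ts @ xs)) \<in> H"
      using Cons.IH[of "(- 1) # ts"] Cons.prems by simp
    moreover have "symb FR ((pz @ qs) @ [pi, pi] @ (ts @ xs)) = symb FR ((pz @ qs) @ [pi, - 1] @ (ts @ xs))"
      by (rule FS_aa) (use pz qs Cons.prems pi in simp_all)
    ultimately have "symb FR ((pz @ qs @ [pi]) @ [pi] @ ts @ xs) \<in> H" by simp
    moreover have "symb FR ((pz @ qs @ [pi]) @ ts @ [pi] @ xs) \<in> H \<longleftrightarrow> symb FR ((pz @ qs @ [pi]) @ [pi] @ ts @ xs) \<in> H"
      by (rule move_left[OF H]) (use pz qs Cons.prems pi in simp_all)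
    ultimately show ?thesis by simp
  qed
  show ?case using d subgroup_pow_mult[OF H KM_group s1 s2] by simp
qed

lemma exp1:
  assumes H: "subgroup H (KM FR N)" and pz: "\<forall>x\<in>set pz. x \<noteq> 0"
    and A: "\<And>ws. \<forall>w\<in>set ws. w \<noteq> 0 \<and> v w = 0 \<Longrightarrow> length pz + length ws = N \<Longrightarrow> symb FR (pz @ ws) \<in> H"
    and B: "\<And>ws. \<forall>w\<in>set ws. w \<noteq> 0 \<and> v w = 0 \<Longrightarrow> length pz + length ws + 1 = N \<Longrightarrow> symb FR (pz @ [pi] @ ws) \<in> H"
  shows "\<forall>w\<in>set qs. w \<noteq> 0 \<and> v w = 0 \<Longrightarrow> \<forall>x\<in>set xs. x \<noteq> 0 \<Longrightarrow> length pz + length qs + length xs = N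
     \<Longrightarrow> symb FR (pz @ qs @ xs) \<in> H"
proof (induction xs arbitrary: qs)
  case Nil
  then show ?case using A[of qs] by simp
next
  case (Cons x xs)
  have x: "x \<noteq> 0" using Cons.prems by simp
  let ?P = "pz @ qs"
  have nzP: "\<forall>y\<in>set ?P. y \<noteq> 0" using pz Cons.prems by simp
  have nzx: "\<forall>y\<in>set xs. y \<noteq> 0" using Cons.prems by simp
  have N: "Suc (length ?P + length xs) = N" using Cons.prems by simp
  have d: "symb FR (?P @ [x] @ xs) = symb FR (?P @ [pi] @ xs) [^]\<^bsub>KM FR N\<^esub> v x \<otimes>\<^bsub>KM FR N\<^esub> symb FR (?P @ [up x] @ xs)"
    using decomp[OF nzP nzx x] N by simp
  have s2: "symb FR (?P @ [up x] @ xs) \<in> H"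
    using Cons.IH[of "qs @ [up x]"] Cons.prems up_nz[OF x] v_up[OF x] by simp
  have s1: "symb FR (?P @ [pi] @ xs) \<in> H"
    using exp2[OF H pz B, of qs "[]" xs] Cons.prems by simp
  show ?case using d subgroup_pow_mult[OF H KM_group s1 s2] by simp
qed

lemma expansion:
  assumes H: "subgroup H (KM FR N)" and pz: "\<forall>x\<in>set pz. x \<noteq> 0"
    and A: "\<And>ws. \<forall>w\<in>set ws. w \<noteq> 0 \<and> v w = 0 \<Longrightarrow> length pz + length ws = N \<Longrightarrow> symb FR (pz @ ws) \<in> H"
    and B: "\<And>ws. \<forall>w\<in>set ws. w \<noteq> 0 \<and> v w = 0 \<Longrightarrow> length pz + length ws + 1 = N \<Longrightarrow> symb FR (pz @ [pi] @ ws) \<in> H"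
    and xs: "\<forall>x\<in>set xs. x \<noteq> 0" and len: "length pz + length xs = N"
  shows "symb FR (pz @ xs) \<in> H"
proof -
  have "symb FR (pz @ [] @ xs) \<in> H" by (rule exp1[OF H pz A B]) (use xs len in simp_all)
  then show ?thesis by simp
qed

end




lemma F_lmul_hom: "(u::'a::field) \<noteq> 0 \<Longrightarrow> lmul FR n u \<in> hom (KM FR n) (KM FR (Suc n))"
  using field.lmul_hom[OF field_fieldR, of u n] by simp

lemma F_lmul_symb: "(u::'a::field) \<noteq> 0 \<Longrightarrow> \<forall>x\<in>set us. x \<noteq> 0 \<Longrightarrow> length us = n \<Longrightarrow> lmul FR n u (symb FR us) = symb FR (u # us)"
  using field.lmul_symb[OF field_fieldR, of u us n] by (simp add: gF)

lemma F_lmul_gh: "(u::'a::field) \<noteq> 0 \<Longrightarrow> group_hom (KM FR n) (KM FR (Suc n)) (lmul FR n u)"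
  by (simp add: group_hom_def group_hom_axioms_def KM_group F_lmul_hom)

context dvr
begin

abbreviation FF :: "'a ring" where "FF \<equiv> fieldR"

lemma mpow_mono: "k \<le> l \<Longrightarrow> mpow v l \<subseteq> mpow v k"
  by (auto simp: mpow_def)

lemma one_plus_mono: "k \<le> l \<Longrightarrow> one_plus v l \<subseteq> one_plus v k"
  using mpow_mono by (auto simp: one_plus_def)

lemma one_plus_unit:
  assumes u: "u \<in> one_plus v k" and k: "k \<ge> 1"
  shows "u \<noteq> 0 \<and> v u = 0 \<and> res v u = \<one>\<^bsub>kk\<^esub>"
proof -
  obtain x where x: "u = 1 + x" "x \<in> mpow v k" using u by (auto simp: one_plus_def)
  have xm: "x \<in> mpow v 1" using x(2) mpow_mono[OF k] by auto
  show ?thesis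
  proof (cases "x = 0")
    case True then show ?thesis using x res_one by simp
  next
    case False
    have vx: "v x \<ge> 1" using xm False by (simp add: mpow_def)
    have uv: "u \<noteq> 0 \<and> v u = 0" using v_strict[of 1 x] False vx x(1) by simp
    have "res v u = res v 1 \<oplus>\<^bsub>kk\<^esub> res v x" using res_add[of 1 x] x(1) vr_1 xm mpow_sub by auto
    also have "res v x = \<zero>\<^bsub>kk\<^esub>" using res_zero_iff[of x] xm mpow_sub by auto
    finally have "res v u = \<one>\<^bsub>kk\<^esub>" using res_one by simp
    then show ?thesis using uv by simp
  qed
qed

lemma tame_hom: "tame v n \<in> hom (KM FR (Suc n)) (KM kk n)"
  using tame_prop_tame[of n] unfolding tame_prop_def by blast

lemma tame_gh: "group_hom (KM FR (Suc n)) (KM kk n) (tame v n)"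
  by (simp add: group_hom_def group_hom_axioms_def KM_group tame_hom)

lemma tame_units:
  "length us = Suc n \<Longrightarrow> \<forall>u\<in>set us. u \<noteq> 0 \<and> v u = 0 \<Longrightarrow> tame v n (symb FR us) = \<one>\<^bsub>KM kk n\<^esub>"
  using tame_prop_tame[of n] unfolding tame_prop_def by blast

lemma tame_pi:
  "p \<noteq> 0 \<Longrightarrow> v p = 1 \<Longrightarrow> length us = n \<Longrightarrow> \<forall>u\<in>set us. u \<noteq> 0 \<and> v u = 0
    \<Longrightarrow> tame v n (symb FR (p # us)) = symb kk (map (res v) us)"
  using tame_prop_tame[of n] unfolding tame_prop_def by blast

lemma P1:
  assumes u: "u \<in> one_plus v 1" and xs: "\<forall>x\<in>set xs. x \<noteq> 0" and len: "length xs = n"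
  shows "tame v n (symb FR (u # xs)) = \<one>\<^bsub>KM kk n\<^esub>"
proof -
  have uu: "u \<noteq> 0" "v u = 0" "res v u = \<one>\<^bsub>kk\<^esub>" using one_plus_unit[OF u] by auto
  let ?H = "kernel (KM FR (Suc n)) (KM kk n) (tame v n)"
  have H: "subgroup ?H (KM FR (Suc n))" using group_hom.subgroup_kernel[OF tame_gh] .
  have "symb FR ([u] @ xs) \<in> ?H"
  proof (rule expansion[OF H])
    show "\<forall>x\<in>set [u]. x \<noteq> 0" using uu by simp
  next
    fix ws assume ws: "\<forall>w\<in>set ws. w \<noteq> 0 \<and> v w = 0" "length [u] + length ws = Suc n"
    have c: "symb FR ([u] @ ws) \<in> carrier (KM FR (Suc n))" using FS_carrier[of "[u] @ ws" "Suc n"] ws uu by auto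
    have "tame v n (symb FR (u # ws)) = \<one>\<^bsub>KM kk n\<^esub>" using tame_units[of "u # ws" n] ws uu by simp
    then show "symb FR ([u] @ ws) \<in> ?H" using c unfolding kernel_def by simp
  next
    fix ws assume ws: "\<forall>w\<in>set ws. w \<noteq> 0 \<and> v w = 0" "length [u] + length ws + 1 = Suc n"
    have nz: "\<forall>w\<in>set ws. w \<noteq> 0" using ws by simp
    have sw: "symb FR ([] @ [u, pi] @ ws) = inv\<^bsub>KM FR (Suc n)\<^esub> symb FR ([] @ [pi, u] @ ws)"
      using FS_swap[of "[]" ws u pi] nz uu pi ws by simp
    have c: "symb FR (pi # u # ws) \<in> carrier (KM FR (Suc n))" using FS_carrier[of "pi # u # ws" "Suc n"] ws uu pi by auto
    have g1: "[] @ [\<one>\<^bsub>kk\<^esub>] @ map (res v) ws \<in> KM_gens kk n"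
      using ws res_unit_nz by (auto simp: KM_gens_iff)
    have "tame v n (symb FR (pi # u # ws)) = symb kk (map (res v) (u # ws))" using tame_pi[of pi "u # ws" n] pi ws uu by simp
    also have "\<dots> = \<one>\<^bsub>KM kk n\<^esub>" using k.symb_one_entry[OF g1] uu by simp
    finally have "symb FR (pi # u # ws) \<in> ?H" using c unfolding kernel_def by simp
    then show "symb FR ([u] @ [pi] @ ws) \<in> ?H" using sw subgroup.m_inv_closed[OF H] by simp
  qed (use xs len in simp_all)
  then show ?thesis unfolding kernel_def by simp
qed

lemma part1: "prod_sub FF n (one_plus v 1) (carrier (KM FF n)) \<subseteq> hatK v (Suc n)"
proof -
  let ?H = "kernel (KM FF (Suc n)) (KM kk n) (tame v n)"
  have H: "subgroup ?H (KM FF (Suc n))" using group_hom.subgroup_kernel[OF tame_gh] .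
  have gen: "{lmul FF n u a | u a. u \<in> one_plus v 1 \<and> a \<in> carrier (KM FF n)} \<subseteq> ?H"
  proof clarify
    fix u a assume u: "u \<in> one_plus v 1" and a: "a \<in> carrier (KM FF n)"
    have uu: "u \<noteq> 0" using one_plus_unit[OF u] by simp
    have "(tame v n \<circ> lmul FF n u) a = (\<lambda>x. \<one>\<^bsub>KM kk n\<^esub>) a"
    proof (rule KM_hom_eq[OF KM_group _ _ _ a])
      show "tame v n \<circ> lmul FF n u \<in> hom (KM FF n) (KM kk n)" using hom_compose[OF F_lmul_hom[OF uu] tame_hom] .
      show "(\<lambda>x. \<one>\<^bsub>KM kk n\<^esub>) \<in> hom (KM FF n) (KM kk n)" using trivial_hom[OF KM_group] .
      fix us assume us: "us \<in> KM_gens FF n"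
      then show "(tame v n \<circ> lmul FF n u) (symb FF us) = \<one>\<^bsub>KM kk n\<^esub>"
        using F_lmul_symb[OF uu] P1[OF u] by (simp add: gF)
    qed
    moreover have "lmul FF n u a \<in> carrier (KM FF (Suc n))" using group_hom.hom_closed[OF F_lmul_gh[OF uu] a] .
    ultimately show "lmul FF n u a \<in> ?H" unfolding kernel_def by simp
  qed
  show ?thesis unfolding prod_sub_def hatK.simps
    by (rule group.generate_subgroup_incl[OF KM_group gen H])
qed

lemma hatK_carrier: "hatK v n \<subseteq> carrier (KM FF n)"
  by (cases n) (auto simp: kernel_def)

lemma T_subgroup:
  assumes m: "m \<ge> 1"
  shows "subgroup (prod_sub FF n (one_plus v m) (hatK v n)) (KM FF (Suc n))"
proof -
  have "{lmul FF n u b | u b. u \<in> one_plus v m \<and> b \<in> hatK v n} \<subseteq> carrier (KM FF (Suc n))"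
  proof clarify
    fix u b assume u: "u \<in> one_plus v m" and b: "b \<in> hatK v n"
    have uu: "u \<noteq> 0" using one_plus_unit[OF u m] by simp
    show "lmul FF n u b \<in> carrier (KM FF (Suc n))"
      using group_hom.hom_closed[OF F_lmul_gh[OF uu]] b hatK_carrier by blast
  qed
  then show ?thesis unfolding prod_sub_def by (rule group.generate_is_subgroup[OF KM_group])
qed

lemma GEN:
  assumes m: "m \<ge> 1" and u: "u \<in> one_plus v m" and c: "c \<noteq> 0" "v c = 0"
    and ws: "\<forall>w\<in>set ws. w \<noteq> 0 \<and> v w = 0" "length ws = n"
  shows "symb FF (u # c # ws) \<in> prod_sub FF (Suc n) (one_plus v m) (hatK v (Suc n))"
proof -
  have uu: "u \<noteq> 0" using one_plus_unit[OF u m] by simp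
  have nz: "\<forall>x\<in>set (c # ws). x \<noteq> 0" using c ws by simp
  have b: "symb FF (c # ws) \<in> hatK v (Suc n)"
  proof -
    have "symb FF (c # ws) \<in> carrier (KM FF (Suc n))" using FS_carrier[OF nz] ws by simp
    moreover have "tame v n (symb FF (c # ws)) = \<one>\<^bsub>KM kk n\<^esub>" using tame_units[of "c # ws" n] c ws by simp
    ultimately show ?thesis by (simp add: kernel_def)
  qed
  have "symb FF (u # c # ws) = lmul FF (Suc n) u (symb FF (c # ws))" using F_lmul_symb[OF uu nz] ws by simp
  then show ?thesis unfolding prod_sub_def using u b by (auto intro: generate.incl)
qed

lemma KEY:
  assumes m: "m \<ge> 1" and u: "u \<in> one_plus v (m + 1)"
    and ws: "\<forall>w\<in>set ws. w \<noteq> 0 \<and> v w = 0" "length ws = n"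
  shows "symb FF (u # pi # ws) \<in> prod_sub FF (Suc n) (one_plus v m) (hatK v (Suc n))"
proof -
  let ?T = "prod_sub FF (Suc n) (one_plus v m) (hatK v (Suc n))"
  let ?G = "KM FF (Suc (Suc n))"
  interpret G: comm_group ?G by (rule KM_comm)
  have T: "subgroup ?T ?G" using T_subgroup[OF m] .
  interpret T: subgroup ?T ?G by (rule T)
  have um: "u \<in> one_plus v m" using u one_plus_mono[of m "m + 1"] by auto
  have uu: "u \<noteq> 0" "v u = 0" using one_plus_unit[OF u] by auto
  have wsnz: "\<forall>w\<in>set ws. w \<noteq> 0" using ws by simp
  let ?X = "symb FF (u # pi # ws)"
  have Xc: "?X \<in> carrier ?G" using FS_carrier[of "u # pi # ws" "Suc (Suc n)"] ws uu pi by auto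
  obtain x where x: "u = 1 + x" "x \<in> mpow v (m + 1)" using u by (auto simp: one_plus_def)
  show ?thesis
  proof (cases "x = 0")
    case True
    have "symb FF ([] @ [\<one>\<^bsub>FF\<^esub>] @ (pi # ws)) = \<one>\<^bsub>?G\<^esub>"
      using field.symb_one_entry[OF field_fieldR, of "[]" pi "pi # ws" "Suc (Suc n)"] pi ws by (simp add: gF)
    then have "?X = \<one>\<^bsub>?G\<^esub>" using True x by simp
    then show ?thesis using T.one_closed by simp
  next
    case False
    have vx: "v x \<ge> int m + 1" using False x(2) by (simp add: mpow_def)
    define y where "y = - x / pi"
    have y0: "y \<noteq> 0" unfolding y_def using False pi by simp
    have vy: "v y = v x - 1" unfolding y_def using v_divide[of "- x" pi] False pi by simp
    have uy: "u = 1 - y * pi" unfolding y_def using x(1) pi by simp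
    have ypi: "y * pi \<noteq> 0" using y0 pi by simp
    have my: "- y \<noteq> 0" "v (- y) > 0" using y0 vy vx m by auto
    have oy: "1 - y \<noteq> 0" "v (1 - y) = 0" using v_strict[of 1 "- y"] my by auto
    have opi: "1 - pi \<noteq> 0" "v (1 - pi) = 0" using v_strict[of 1 "- pi"] pi by auto
    have oym: "1 - y \<in> one_plus v m"
      unfolding one_plus_def mpow_def using vy vx by (auto intro!: exI[of _ "- y"])
    define A where "A = (\<lambda>a b. symb FF (a # b # ws))"
    have Ac: "A a b \<in> carrier ?G" if "a \<noteq> 0" "b \<noteq> 0" for a b
      unfolding A_def using FS_carrier[of "a # b # ws" "Suc (Suc n)"] that ws by simp
    have Asw: "A a b = inv\<^bsub>?G\<^esub> A b a" if "a \<noteq> 0" "b \<noteq> 0" for a b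
      unfolding A_def using FS_swap[of "[]" ws a b] that wsnz ws by simp
    have AT_swap: "A a b \<in> ?T" if "a \<noteq> 0" "b \<noteq> 0" "A b a \<in> ?T" for a b
    proof -
      have "inv\<^bsub>?G\<^esub> A b a \<in> ?T" using T.m_inv_closed[OF that(3)] .
      then show ?thesis using Asw[OF that(1,2)] by metis
    qed
    have GENu: "\<And>c. c \<noteq> 0 \<Longrightarrow> v c = 0 \<Longrightarrow> A u c \<in> ?T" unfolding A_def using GEN[OF m um _ _ ws] by simp
    have a: "?X [^]\<^bsub>?G\<^esub> (v y + 1) \<in> ?T"
    proof -
      have s: "u + y * pi = 1" using uy by simp
      have "symb FF ([] @ [u, y * pi] @ ws) = \<one>\<^bsub>?G\<^esub>" using FS_stein[of "[]" ws u "y * pi"] wsnz uu ypi s ws by simp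
      moreover have "symb FF ([u] @ [y * pi] @ ws) = symb FF ([u] @ [pi] @ ws) [^]\<^bsub>?G\<^esub> v (y * pi) \<otimes>\<^bsub>?G\<^esub> symb FF ([u] @ [up (y * pi)] @ ws)"
        using decomp[of "[u]" ws "y * pi"] uu wsnz ypi ws by simp
      ultimately have e: "?X [^]\<^bsub>?G\<^esub> v (y * pi) \<otimes>\<^bsub>?G\<^esub> A u (up (y * pi)) = \<one>\<^bsub>?G\<^esub>" unfolding A_def by simp
      have C: "A u (up (y * pi)) \<in> ?T" using GENu up_nz[OF ypi] v_up[OF ypi] by simp
      have Cc: "A u (up (y * pi)) \<in> carrier ?G" using Ac uu up_nz[OF ypi] by simp
      have "inv\<^bsub>?G\<^esub> A u (up (y * pi)) = ?X [^]\<^bsub>?G\<^esub> v (y * pi)"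
        by (rule G.inv_equality[OF e Cc G.int_pow_closed[OF Xc]])
      then have "?X [^]\<^bsub>?G\<^esub> v (y * pi) \<in> ?T" using C T.m_inv_closed by metis
      then show ?thesis using v_mult[OF y0 pi(1)] pi by simp
    qed
    define z where "z = (1 - pi) * y * inverse u"
    define w where "w = (1 - y) * inverse u"
    have z0: "z \<noteq> 0" unfolding z_def using opi y0 uu by simp
    have w0: "w \<noteq> 0" unfolding w_def using oy uu by simp
    have zw: "z + w = 1"
    proof -
      have e: "(1 - pi) * y + (1 - y) = u" using uy by (simp add: algebra_simps)
      have "z + w = ((1 - pi) * y + (1 - y)) * inverse u" unfolding z_def w_def by (simp add: algebra_simps)
      also have "\<dots> = 1" unfolding e using uu(1) by simp
      finally show ?thesis .
    qed
    have S0: "A z w = \<one>\<^bsub>?G\<^esub>" unfolding A_def using FS_stein[of "[]" ws z w] wsnz z0 w0 zw ws by simp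
    have first: "A z w = A (1 - pi) w \<otimes>\<^bsub>?G\<^esub> A y w \<otimes>\<^bsub>?G\<^esub> inv\<^bsub>?G\<^esub> A u w"
    proof -
      have n1: "\<forall>x\<in>set (w # ws). x \<noteq> 0" using w0 wsnz by simp
      have "A z w = A ((1 - pi) * y) w \<otimes>\<^bsub>?G\<^esub> A (inverse u) w"
        unfolding A_def z_def using FS_mult[of "[]" "w # ws" "(1 - pi) * y" "inverse u"] n1 opi y0 uu ws by simp
      also have "A ((1 - pi) * y) w = A (1 - pi) w \<otimes>\<^bsub>?G\<^esub> A y w"
        unfolding A_def using FS_mult[of "[]" "w # ws" "1 - pi" y] n1 opi y0 ws by simp
      also have "A (inverse u) w = inv\<^bsub>?G\<^esub> A u w"
        unfolding A_def using FS_inv[of "[]" "w # ws" u] n1 uu ws by simp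
      finally show ?thesis .
    qed
    have second: "\<And>a. a \<noteq> 0 \<Longrightarrow> A a w = A a (1 - y) \<otimes>\<^bsub>?G\<^esub> inv\<^bsub>?G\<^esub> A a u"
    proof -
      fix a :: 'a assume a0: "a \<noteq> 0"
      have n1: "\<forall>x\<in>set [a]. x \<noteq> 0" using a0 by simp
      have "A a w = A a (1 - y) \<otimes>\<^bsub>?G\<^esub> A a (inverse u)"
        unfolding A_def w_def using FS_mult[of "[a]" ws "1 - y" "inverse u"] n1 wsnz oy uu ws by simp
      also have "A a (inverse u) = inv\<^bsub>?G\<^esub> A a u"
        unfolding A_def using FS_inv[of "[a]" ws u] n1 wsnz uu ws by simp
      finally show "A a w = A a (1 - y) \<otimes>\<^bsub>?G\<^esub> inv\<^bsub>?G\<^esub> A a u" .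
    qed
    have T1: "A (1 - pi) w \<in> ?T"
    proof -
      have "A (1 - pi) (1 - y) \<in> ?T"
        by (rule AT_swap[OF opi(1) oy(1)]) (unfold A_def, rule GEN[OF m oym opi ws])
      moreover have "A (1 - pi) u \<in> ?T" by (rule AT_swap[OF opi(1) uu(1)]) (rule GENu[OF opi])
      ultimately show ?thesis using second[OF opi(1)] T.m_closed T.m_inv_closed by simp
    qed
    have T2: "A u w \<in> ?T"
    proof -
      have "A u (1 - y) \<in> ?T" using GENu[OF oy] .
      moreover have "A u u \<in> ?T"
      proof -
        have "A u u = A u (- 1)" unfolding A_def using FS_aa[of "[]" ws u] wsnz uu ws by simp
        then show ?thesis using GENu[of "- 1"] by simp
      qed
      ultimately show ?thesis using second[OF uu(1)] T.m_closed T.m_inv_closed by simp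
    qed
    have Ayw: "A y w \<in> ?T"
    proof -
      have c1: "A (1 - pi) w \<in> carrier ?G" "A y w \<in> carrier ?G" "A u w \<in> carrier ?G"
        using Ac opi y0 w0 uu by auto
      have "A y w = inv\<^bsub>?G\<^esub> A (1 - pi) w \<otimes>\<^bsub>?G\<^esub> A u w"
      proof -
        have e: "A (1 - pi) w \<otimes>\<^bsub>?G\<^esub> A y w \<otimes>\<^bsub>?G\<^esub> inv\<^bsub>?G\<^esub> A u w = \<one>\<^bsub>?G\<^esub>" using S0 first by simp
        have "A (1 - pi) w \<otimes>\<^bsub>?G\<^esub> A y w = (A (1 - pi) w \<otimes>\<^bsub>?G\<^esub> A y w \<otimes>\<^bsub>?G\<^esub> inv\<^bsub>?G\<^esub> A u w) \<otimes>\<^bsub>?G\<^esub> A u w"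
          using c1 by (simp add: G.m_assoc)
        also have "\<dots> = A u w" using e c1 by simp
        finally have "A u w = A (1 - pi) w \<otimes>\<^bsub>?G\<^esub> A y w" by simp
        then show ?thesis using G.inv_solve_left[OF c1(2) c1(1) c1(3)] by simp
      qed
      then show ?thesis using T1 T2 T.m_closed T.m_inv_closed by simp
    qed
    have Ayu: "A y u \<in> ?T"
    proof -
      have "A y (1 - y) = \<one>\<^bsub>?G\<^esub>" unfolding A_def using FS_stein[of "[]" ws y "1 - y"] wsnz y0 oy ws by simp
      then have "A y w = inv\<^bsub>?G\<^esub> A y u" using second[OF y0] Ac[OF y0 uu(1)] by simp
      then show ?thesis using Ayw subgroup_inv_iff[OF T KM_group Ac[OF y0 uu(1)]] by simp
    qed
    have b: "?X [^]\<^bsub>?G\<^esub> v y \<in> ?T"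
    proof -
      have d: "A y u = A pi u [^]\<^bsub>?G\<^esub> v y \<otimes>\<^bsub>?G\<^esub> A (up y) u"
        unfolding A_def using decomp[of "[]" "u # ws" y] uu wsnz y0 ws by simp
      have piu: "A pi u = inv\<^bsub>?G\<^esub> ?X" using Asw[OF pi(1) uu(1)] unfolding A_def by simp
      have Aup: "A (up y) u \<in> ?T" using AT_swap[OF up_nz[OF y0] uu(1)] GENu[OF up_nz[OF y0] v_up[OF y0]] by simp
      have Aupc: "A (up y) u \<in> carrier ?G" using Ac up_nz[OF y0] uu by simp
      have Pc: "A pi u [^]\<^bsub>?G\<^esub> v y \<in> carrier ?G" using Ac[OF pi(1) uu(1)] by simp
      have "A y u \<otimes>\<^bsub>?G\<^esub> inv\<^bsub>?G\<^esub> A (up y) u = A pi u [^]\<^bsub>?G\<^esub> v y \<otimes>\<^bsub>?G\<^esub> (A (up y) u \<otimes>\<^bsub>?G\<^esub> inv\<^bsub>?G\<^esub> A (up y) u)"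
        unfolding d using Pc Aupc by (simp only: G.m_assoc G.inv_closed)
      then have "A pi u [^]\<^bsub>?G\<^esub> v y = A y u \<otimes>\<^bsub>?G\<^esub> inv\<^bsub>?G\<^esub> A (up y) u"
        using Pc Aupc by simp
      then have "A pi u [^]\<^bsub>?G\<^esub> v y \<in> ?T" using Ayu Aup T.m_closed T.m_inv_closed by simp
      then have "inv\<^bsub>?G\<^esub> (?X [^]\<^bsub>?G\<^esub> v y) \<in> ?T" using piu G.int_pow_inv[OF Xc] by simp
      then show ?thesis using subgroup_inv_iff[OF T KM_group] Xc by simp
    qed
    have Pc: "?X [^]\<^bsub>?G\<^esub> v y \<in> carrier ?G" using Xc by simp
    have "?X [^]\<^bsub>?G\<^esub> (v y + 1) = ?X [^]\<^bsub>?G\<^esub> v y \<otimes>\<^bsub>?G\<^esub> ?X"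
      using G.int_pow_mult[OF Xc, of "v y" 1] Xc by simp
    then have "inv\<^bsub>?G\<^esub> (?X [^]\<^bsub>?G\<^esub> v y) \<otimes>\<^bsub>?G\<^esub> ?X [^]\<^bsub>?G\<^esub> (v y + 1) = (inv\<^bsub>?G\<^esub> (?X [^]\<^bsub>?G\<^esub> v y) \<otimes>\<^bsub>?G\<^esub> ?X [^]\<^bsub>?G\<^esub> v y) \<otimes>\<^bsub>?G\<^esub> ?X"
      using Pc Xc by (simp only: G.m_assoc G.inv_closed)
    also have "\<dots> = ?X" using Pc Xc by simp
    finally have eX: "?X = inv\<^bsub>?G\<^esub> (?X [^]\<^bsub>?G\<^esub> v y) \<otimes>\<^bsub>?G\<^esub> ?X [^]\<^bsub>?G\<^esub> (v y + 1)" by simp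
    have "inv\<^bsub>?G\<^esub> (?X [^]\<^bsub>?G\<^esub> v y) \<in> ?T" using b by (rule T.m_inv_closed)
    from T.m_closed[OF this a] eX show ?thesis by simp
  qed
qed

lemma P2:
  assumes m: "m \<ge> 1" and u: "u \<in> one_plus v (m + Suc n)"
    and xs: "\<forall>x\<in>set xs. x \<noteq> 0" "length xs = Suc n"
  shows "symb FF (u # xs) \<in> prod_sub FF (Suc n) (one_plus v m) (hatK v (Suc n))"
proof -
  let ?T = "prod_sub FF (Suc n) (one_plus v m) (hatK v (Suc n))"
  have T: "subgroup ?T (KM FF (Suc (Suc n)))" using T_subgroup[OF m] .
  have um: "u \<in> one_plus v m" using u one_plus_mono[of m "m + Suc n"] by auto
  have u1: "u \<in> one_plus v (m + 1)" using u one_plus_mono[of "m + 1" "m + Suc n"] by auto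
  have uu: "u \<noteq> 0" using one_plus_unit[OF u] m by simp
  have "symb FF ([u] @ xs) \<in> ?T"
  proof (rule expansion[OF T])
    show "\<forall>x\<in>set [u]. x \<noteq> 0" using uu by simp
  next
    fix ws assume ws: "\<forall>w\<in>set ws. w \<noteq> 0 \<and> v w = 0" "length [u] + length ws = Suc (Suc n)"
    then obtain c ws' where c: "ws = c # ws'" by (cases ws) auto
    show "symb FF ([u] @ ws) \<in> ?T" using GEN[OF m um, of c ws' n] ws c by simp
  next
    fix ws assume ws: "\<forall>w\<in>set ws. w \<noteq> 0 \<and> v w = 0" "length [u] + length ws + 1 = Suc (Suc n)"
    show "symb FF ([u] @ [pi] @ ws) \<in> ?T" using KEY[OF m u1, of ws n] ws by simp
  qed (use xs in simp_all)
  then show ?thesis by simp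
qed

lemma part2:
  assumes m: "m \<ge> 1"
  shows "prod_sub FF n (one_plus v (m + n)) (carrier (KM FF n)) \<subseteq> prod_sub FF n (one_plus v m) (hatK v n)"
proof (cases n)
  case 0
  then show ?thesis by simp
next
  case (Suc n')
  let ?T = "prod_sub FF (Suc n') (one_plus v m) (hatK v (Suc n'))"
  have T: "subgroup ?T (KM FF (Suc (Suc n')))" using T_subgroup[OF m] .
  interpret T: subgroup ?T "KM FF (Suc (Suc n'))" by (rule T)
  have gen: "{lmul FF (Suc n') u a | u a. u \<in> one_plus v (m + Suc n') \<and> a \<in> carrier (KM FF (Suc n'))} \<subseteq> ?T"
  proof clarify
    fix u a assume u: "u \<in> one_plus v (m + Suc n')" and a: "a \<in> carrier (KM FF (Suc n'))"
    have uu: "u \<noteq> 0" using one_plus_unit[OF u] m by simp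
    interpret h: group_hom "KM FF (Suc n')" "KM FF (Suc (Suc n'))" "lmul FF (Suc n') u" by (rule F_lmul_gh[OF uu])
    show "lmul FF (Suc n') u a \<in> ?T"
      using a
    proof (induction a rule: KM_induct)
      case one then show ?case using T.one_closed by simp
    next
      case (sym us)
      then have "lmul FF (Suc n') u (symb FF us) = symb FF (u # us)" using F_lmul_symb[OF uu] by (simp add: gF)
      then show ?case using P2[OF m u, of us] sym by (simp add: gF)
    next
      case (diff x y)
      then show ?case using T.m_closed T.m_inv_closed by simp
    qed
  qed
  show ?thesis unfolding Suc prod_sub_def[of FF "Suc n'" "one_plus v (m + Suc n')"]
    by (rule group.generate_subgroup_incl[OF KM_group gen T])
qed

end

theorem lemma3p4:
  fixes v :: "'a::field \<Rightarrow> int" and n :: nat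
  assumes dv: "discrete_valuation v"
    and contains_field: "\<exists>k. subfield k (valR v)"
  shows "prod_sub fieldR n (one_plus v 1) (carrier (KM fieldR n)) \<subseteq> hatK v (Suc n)
       \<and> (\<forall>m::nat. m \<ge> 1 \<longrightarrow>
           prod_sub fieldR n (one_plus v (m + n)) (carrier (KM fieldR n))
             \<subseteq> prod_sub fieldR n (one_plus v m) (hatK v n))"
proof -
  interpret dvr v by (rule dvr.intro[OF dv])
  show ?thesis using part1 part2 by blast
qed


end
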